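(* For every cocycle $\tau\in Z^1(\Gamma,{\mathbb R}^{d,1})$ there exists a $C^\infty$ convex (resp. concave) $\tau$-equivariant function $B^d\to{\mathbb R}$. Moreover, if $\tau_n\to\tau$ in $Z^1(\Gamma,{\mathbb R}^{d,1})$, then there exist a $C^\infty$ convex (resp. concave) $\tau$-equivariant function $h$ and $C^\infty$ convex (resp. concave) $\tau_n$-equivariant functions $h_n$ such that $h_n\to h$ pointwise on $B^d$ and all second partial derivatives of $h_n$ converge to those of $h$.
   Context: Notation. $B^d$ denotes the open Euclidean unit ball of ${\mathbb R}^d$; $\langle\cdot,\cdot\rangle_d$ and $\|\cdot\|$ are the Euclidean inner product and norm, and $L(x)=\sqrt{1-\|x\|^2}$. Minkowski space ${\mathbb R}^{d,1}$ is ${\mathbb R}^{d+1}$ with $\langle x,y\rangle_{d,1}=x_1y_1+\dots+x_dy_d-x_{d+1}y_{d+1}$; for $v\in{\mathbb R}^{d,1}$ write $v=(\bar v,v_{d+1})$. $O_+(d,1)$ is the group of linear maps preserving $\langle\cdot,\cdot\rangle_{d,1}$ and the sheet $\{\langle x,x\rangle_{d,1}=-1,\ x_{d+1}>0\}$. For $A\in O_+(d,1)$, $x\in B^d$, $A\cdot x\in B^d$ is the unique point with $A\binom{x}{1}\in{\mathbb R}_{>0}\binom{A\cdot x}{1}$; this is an isometry of the Klein metric $g_{{\mathbb H}^d}(x)(X,Y)=L(x)^{-2}\langle X,Y\rangle_d+L(x)^{-4}\langle x,X\rangle_d\langle x,Y\rangle_d$. Action on functions. $((A,v)h)(x)=\frac{L(x)}{L(A^{-1}\cdot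 x)}h(A^{-1}\cdot x)+\langle x,\bar v\rangle_d-v_{d+1}$. Group setup. $d\ge2$ and $\Gamma\subset O_+(d,1)$ is a subgroup such that the action $x\mapsto A\cdot x$ of $\Gamma$ on $B^d$ is free, properly discontinuous and cocompact. A cocycle is a map $\tau:\Gamma\to{\mathbb R}^{d,1}$ with $\tau(AB)=\tau(A)+A\tau(B)$; they form the finite-dimensional vector space $Z^1(\Gamma,{\mathbb R}^{d,1})$, and $\tau_n\to\tau$ means $\tau_n(A)\to\tau(A)$ for every $A\in\Gamma$. For a cocycle $\tau$, a continuous $h:B^d\to{\mathbb R}$ is $\tau$-equivariant if $(A,\tau(A))h=h$ for all $A\in\Gamma$. *)

theory Defs
  imports "HOL-Analysis.Analysis"
begin

text \<open>Coordinates of R^d are indexed by a finite type 'n (d = CARD('n)).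
  Minkowski space R^{d,1} is modelled as (real^'n) \<times> real, v = (v-bar, v_{d+1}).\<close>

type_synonym 'n mink = "(real^'n) \<times> real"

definition mink_inner :: "'n::finite mink \<Rightarrow> 'n mink \<Rightarrow> real" where
  "mink_inner x y = fst x \<bullet> fst y - snd x * snd y"

definition L :: "real^'n::finite \<Rightarrow> real" where
  "L x = sqrt (1 - norm x ^ 2)"

definition O_plus :: "('n::finite mink \<Rightarrow> 'n mink) set" where
  "O_plus = {A. linear A \<and> (\<forall>x y. mink_inner (A x) (A y) = mink_inner x y)
              \<and> (\<forall>x. mink_inner x x = -1 \<and> snd x > 0 \<longrightarrow> snd (A x) > 0)}"

text \<open>Projective action on the Klein ball: A(x,1) is a positive multiple of (A.x,1).\<close>
definition klein_act :: "('n::finite mink \<Rightarrow> 'n mink) \<Rightarrow> real^'n \<Rightarrow> real^'n" where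
  "klein_act A x = (1 / snd (A (x, 1))) *\<^sub>R fst (A (x, 1))"

definition is_subgroup_O :: "('n::finite mink \<Rightarrow> 'n mink) set \<Rightarrow> bool" where
  "is_subgroup_O G \<longleftrightarrow> G \<subseteq> O_plus \<and> id \<in> G \<and> (\<forall>A\<in>G. \<forall>B\<in>G. A \<circ> B \<in> G)
      \<and> (\<forall>A\<in>G. inv A \<in> G)"

definition acts_freely :: "('n::finite mink \<Rightarrow> 'n mink) set \<Rightarrow> bool" where
  "acts_freely G \<longleftrightarrow> (\<forall>A\<in>G. \<forall>x\<in>ball 0 1. klein_act A x = x \<longrightarrow> A = id)"

definition acts_properly_discontinuously :: "('n::finite mink \<Rightarrow> 'n mink) set \<Rightarrow> bool" where
  "acts_properly_discontinuously G \<longleftrightarrow>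
     (\<forall>K. compact K \<and> K \<subseteq> ball 0 1 \<longrightarrow> finite {A\<in>G. klein_act A ` K \<inter> K \<noteq> {}})"

definition acts_cocompactly :: "('n::finite mink \<Rightarrow> 'n mink) set \<Rightarrow> bool" where
  "acts_cocompactly G \<longleftrightarrow>
     (\<exists>K. compact K \<and> K \<subseteq> ball 0 1 \<and> (\<Union>A\<in>G. klein_act A ` K) = ball 0 1)"

definition cocycle :: "('n::finite mink \<Rightarrow> 'n mink) set \<Rightarrow> (('n mink \<Rightarrow> 'n mink) \<Rightarrow> 'n mink) \<Rightarrow> bool" where
  "cocycle G \<tau> \<longleftrightarrow> (\<forall>A\<in>G. \<forall>B\<in>G. \<tau> (A \<circ> B) = \<tau> A + A (\<tau> B))"

definition fun_act :: "('n::finite mink \<Rightarrow> 'n mink) \<Rightarrow> 'n mink \<Rightarrow> (real^'n \<Rightarrow> real) \<Rightarrow> real^'n \<Rightarrow> real" where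
  "fun_act A v h x = L x / L (klein_act (inv A) x) * h (klein_act (inv A) x) + x \<bullet> fst v - snd v"

definition equivariant :: "('n::finite mink \<Rightarrow> 'n mink) set \<Rightarrow> (('n mink \<Rightarrow> 'n mink) \<Rightarrow> 'n mink)
    \<Rightarrow> (real^'n \<Rightarrow> real) \<Rightarrow> bool" where
  "equivariant G \<tau> h \<longleftrightarrow> continuous_on (ball 0 1) h \<and>
     (\<forall>A\<in>G. \<forall>x\<in>ball 0 1. fun_act A (\<tau> A) h x = h x)"

definition partial_deriv :: "'n::finite \<Rightarrow> (real^'n \<Rightarrow> real) \<Rightarrow> real^'n \<Rightarrow> real" where
  "partial_deriv i f x = frechet_derivative f (at x) (axis i 1)"

fun iter_partial :: "'n::finite list \<Rightarrow> (real^'n \<Rightarrow> real) \<Rightarrow> real^'n \<Rightarrow> real" where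
  "iter_partial [] f = f"
| "iter_partial (i # is) f = partial_deriv i (iter_partial is f)"

definition smooth_on :: "(real^'n::finite) set \<Rightarrow> (real^'n \<Rightarrow> real) \<Rightarrow> bool" where
  "smooth_on S f \<longleftrightarrow> (\<forall>is. iter_partial is f differentiable_on S)"

end

theory Submission
  imports Defs "HOL-Computational_Algebra.Polynomial"
begin
lemma partial_deriv_eq:
  assumes "(f has_derivative D) (at x)"
  shows "partial_deriv i f x = D (axis i 1)"
  using frechet_derivative_at[OF assms] by (simp add: partial_deriv_def)

lemma has_derivative_partials:
  fixes f :: "real^'n::finite \<Rightarrow> real"
  assumes "f differentiable at x"
  shows "(f has_derivative (\<lambda>v. \<Sum>i\<in>UNIV. v$i * partial_deriv i f x)) (at x)"
proof -
  let ?D = "frechet_derivative f (at x)"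
  have d: "(f has_derivative ?D) (at x)" using assms frechet_derivative_works by blast
  have lin: "linear ?D" using has_derivative_linear[OF d] .
  have "?D v = (\<Sum>i\<in>UNIV. v$i * partial_deriv i f x)" for v
  proof -
    have "?D v = ?D (\<Sum>i\<in>UNIV. (v$i) *s axis i 1)" by (simp add: basis_expansion)
    also have "\<dots> = (\<Sum>i\<in>UNIV. v$i * ?D (axis i 1))"
      using lin by (simp add: linear_sum linear_scale scalar_mult_eq_scaleR)
    finally show ?thesis by (simp add: partial_deriv_def)
  qed
  then show ?thesis using d by (metis (no_types, lifting) ext)
qed

lemma partial_deriv_local:
  fixes f g :: "real^'n::finite \<Rightarrow> real"
  assumes "open T" "x \<in> T" "\<And>y. y \<in> T \<Longrightarrow> f y = g y" "g differentiable at x"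
  shows "partial_deriv i f x = partial_deriv i g x" "f differentiable at x"
proof -
  obtain D where D: "(g has_derivative D) (at x)" using assms(4) by (auto simp: differentiable_def)
  have "(f has_derivative D) (at x)"
    using has_derivative_transform_within_open[OF D assms(1,2)] assms(3) by metis
  then show "partial_deriv i f x = partial_deriv i g x" "f differentiable at x"
    using D partial_deriv_eq[of f D x i] partial_deriv_eq[of g D x i] by (auto simp: differentiable_def)
qed

lemma iter_partial_local:
  fixes f g :: "real^'n::finite \<Rightarrow> real"
  assumes "open T" "\<And>y. y \<in> T \<Longrightarrow> f y = g y" "smooth_on T g" "y \<in> T"
  shows "iter_partial is f y = iter_partial is g y"
  using assms(4)
proof (induction "is" arbitrary: y)
  case Nil then show ?case using assms(2) by simp
next
  case (Cons i "is")
  have "g' differentiable at y" if "g' = iter_partial is g" for g'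
    using assms(3) Cons.prems assms(1) unfolding smooth_on_def that
    by (meson differentiable_on_eq_differentiable_at)
  then show ?case using partial_deriv_local(1)[OF assms(1) Cons.prems Cons.IH] by simp
qed

lemma differentiable_on_open_local:
  fixes f g :: "real^'n::finite \<Rightarrow> real"
  assumes "open S" "\<And>x. x \<in> S \<Longrightarrow> f differentiable at x"
  shows "f differentiable_on S"
  using assms by (simp add: differentiable_at_imp_differentiable_on)

lemma smooth_on_local:
  fixes f :: "real^'n::finite \<Rightarrow> real"
  assumes "open S"
    and "\<And>x. x \<in> S \<Longrightarrow> \<exists>T g. open T \<and> x \<in> T \<and> smooth_on T g \<and> (\<forall>y\<in>T. f y = g y)"
  shows "smooth_on S f"
  unfolding smooth_on_def
proof
  fix "is"
  show "iter_partial is f differentiable_on S"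
  proof (rule differentiable_on_open_local[OF assms(1)])
    fix x assume x: "x \<in> S"
    obtain T g where T: "open T" "x \<in> T" "smooth_on T g" "\<forall>y\<in>T. f y = g y" using assms(2)[OF x] by blast
    have eq: "\<And>y. y \<in> T \<Longrightarrow> iter_partial is f y = iter_partial is g y"
      using iter_partial_local[OF T(1) _ T(3)] T(4) by blast
    note pl = partial_deriv_local(2)[OF T(1,2), of "iter_partial is f" "iter_partial is g"]
    have "iter_partial is g differentiable at x"
      using T(3) T(1,2) unfolding smooth_on_def by (meson differentiable_on_eq_differentiable_at)
    then show "iter_partial is f differentiable at x"
      using pl eq by blast
  qed
qed

lemma smooth_on_cong:
  fixes f g :: "real^'n::finite \<Rightarrow> real"
  assumes "open S" "smooth_on S g" "\<And>x. x \<in> S \<Longrightarrow> f x = g x"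
  shows "smooth_on S f"
  using assms by (intro smooth_on_local) blast+

lemma smooth_on_subset:
  "smooth_on S f \<Longrightarrow> T \<subseteq> S \<Longrightarrow> smooth_on T f"
  unfolding smooth_on_def using differentiable_on_subset by blast

lemma iter_partial_append:
  "iter_partial is (partial_deriv i f) = iter_partial (is @ [i]) f"
  by (induction "is") auto

lemma smooth_on_partial:
  "smooth_on S f \<Longrightarrow> smooth_on S (partial_deriv i f)"
  unfolding smooth_on_def by (metis iter_partial.simps iter_partial_append)

lemma smooth_on_diff_at:
  "smooth_on S f \<Longrightarrow> open S \<Longrightarrow> x \<in> S \<Longrightarrow> f differentiable at x"
  unfolding smooth_on_def by (metis iter_partial.simps(1) differentiable_on_eq_differentiable_at)

lemma smooth_coinduct:
  fixes X :: "(real^'n::finite \<Rightarrow> real) set"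
  assumes "open S"
    and "\<And>f. f \<in> X \<Longrightarrow> f differentiable_on S"
    and "\<And>f i. f \<in> X \<Longrightarrow> \<exists>g\<in>X. \<forall>x\<in>S. partial_deriv i f x = g x"
    and "f \<in> X"
  shows "smooth_on S f"
proof -
  have *: "\<forall>f\<in>X. \<exists>g\<in>X. \<forall>x\<in>S. iter_partial is f x = g x" for "is"
  proof (induction "is")
    case Nil then show ?case by auto
  next
    case (Cons i "is")
    show ?case
    proof
      fix f assume "f \<in> X"
      then obtain g where g: "g \<in> X" "\<forall>x\<in>S. iter_partial is f x = g x" using Cons by blast
      obtain g' where g': "g' \<in> X" "\<forall>x\<in>S. partial_deriv i g x = g' x" using assms(3)[OF g(1)] by blast
      have "\<forall>x\<in>S. iter_partial (i#is) f x = g' x"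
      proof
        fix x assume x: "x \<in> S"
        have "g differentiable at x" using assms(2)[OF g(1)] assms(1) x
          by (meson differentiable_on_eq_differentiable_at)
        then show "iter_partial (i#is) f x = g' x"
          using partial_deriv_local(1)[OF assms(1) x, of "iter_partial is f" g i] g g' x by simp
      qed
      then show "\<exists>g\<in>X. \<forall>x\<in>S. iter_partial (i # is) f x = g x" using g' by blast
    qed
  qed
  show ?thesis unfolding smooth_on_def
  proof
    fix "is"
    obtain g where g: "g \<in> X" "\<forall>x\<in>S. iter_partial is f x = g x" using * assms(4) by blast
    show "iter_partial is f differentiable_on S"
    proof (rule differentiable_on_open_local[OF assms(1)])
      fix x assume x: "x \<in> S"
      have "g differentiable at x" using assms(2)[OF g(1)] assms(1) x
        by (meson differentiable_on_eq_differentiable_at)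
      then show "iter_partial is f differentiable at x"
        using partial_deriv_local(2)[OF assms(1) x, of "iter_partial is f" g] g by simp
    qed
  qed
qed

lemma pd_add:
  fixes f g :: "real^'n::finite \<Rightarrow> real"
  assumes "f differentiable at x" "g differentiable at x"
  shows "partial_deriv i (\<lambda>x. f x + g x) x = partial_deriv i f x + partial_deriv i g x"
proof -
  obtain Df Dg where d: "(f has_derivative Df) (at x)" "(g has_derivative Dg) (at x)"
    using assms by (auto simp: differentiable_def)
  from partial_deriv_eq[OF has_derivative_add[OF d]] partial_deriv_eq[OF d(1)] partial_deriv_eq[OF d(2)]
  show ?thesis by simp
qed

lemma pd_mult:
  fixes f g :: "real^'n::finite \<Rightarrow> real"
  assumes "f differentiable at x" "g differentiable at x"
  shows "partial_deriv i (\<lambda>x. f x * g x) x = partial_deriv i f x * g x + f x * partial_deriv i g x"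
proof -
  obtain Df Dg where d: "(f has_derivative Df) (at x)" "(g has_derivative Dg) (at x)"
    using assms by (auto simp: differentiable_def)
  have "((\<lambda>x. f x * g x) has_derivative (\<lambda>h. f x * Dg h + Df h * g x)) (at x)"
    using has_derivative_mult[OF d] .
  from partial_deriv_eq[OF this] partial_deriv_eq[OF d(1)] partial_deriv_eq[OF d(2)] show ?thesis
    by (simp add: algebra_simps)
qed

lemma pd_comp:
  fixes u :: "real^'n::finite \<Rightarrow> real"
  assumes "(P has_real_derivative P') (at (u x))" "u differentiable at x"
  shows "partial_deriv i (\<lambda>x. P (u x)) x = P' * partial_deriv i u x"
    "(\<lambda>x. P (u x)) differentiable at x"
proof -
  obtain Du where d: "(u has_derivative Du) (at x)" using assms by (auto simp: differentiable_def)
  have dP: "(P has_derivative (\<lambda>h. P' * h)) (at (u x))"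
    using assms(1) by (simp add: has_field_derivative_def)
  have "((\<lambda>x. P (u x)) has_derivative (\<lambda>h. P' * Du h)) (at x)"
    using has_derivative_compose[OF d dP] by (simp add: o_def)
  from partial_deriv_eq[OF this] partial_deriv_eq[OF d] this
  show "partial_deriv i (\<lambda>x. P (u x)) x = P' * partial_deriv i u x"
    "(\<lambda>x. P (u x)) differentiable at x"
    by (auto simp: differentiable_def)
qed

lemma pd_sum_list_aux:
  fixes F :: "'a \<Rightarrow> real^'n::finite \<Rightarrow> real"
  shows "(\<forall>p\<in>set ps. F p differentiable at x) \<longrightarrow>
    partial_deriv i (\<lambda>x. sum_list (map (\<lambda>p. F p x) ps)) x = sum_list (map (\<lambda>p. partial_deriv i (F p) x) ps) \<and>
    (\<lambda>x. sum_list (map (\<lambda>p. F p x) ps)) differentiable at x"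
proof (induction ps)
  case Nil
  have "partial_deriv i (\<lambda>x. 0::real) x = 0"
    by (simp add: partial_deriv_def frechet_derivative_const)
  then show ?case by simp
next
  case (Cons a ps)
  show ?case
  proof
    assume pr: "\<forall>p\<in>set (a#ps). F p differentiable at x"
    have da: "F a differentiable at x" using pr by simp
    have ih: "partial_deriv i (\<lambda>x. sum_list (map (\<lambda>p. F p x) ps)) x = sum_list (map (\<lambda>p. partial_deriv i (F p) x) ps)"
       "(\<lambda>x. sum_list (map (\<lambda>p. F p x) ps)) differentiable at x" using Cons pr by auto
    show "partial_deriv i (\<lambda>x. sum_list (map (\<lambda>p. F p x) (a#ps))) x = sum_list (map (\<lambda>p. partial_deriv i (F p) x) (a#ps)) \<and>
      (\<lambda>x. sum_list (map (\<lambda>p. F p x) (a#ps))) differentiable at x"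
      using pd_add[OF da ih(2), of i] ih da by simp
  qed
qed

lemma pd_sum_list:
  fixes F :: "'a \<Rightarrow> real^'n::finite \<Rightarrow> real"
  assumes "\<And>p. p \<in> set ps \<Longrightarrow> F p differentiable at x"
  shows "partial_deriv i (\<lambda>x. sum_list (map (\<lambda>p. F p x) ps)) x = sum_list (map (\<lambda>p. partial_deriv i (F p) x) ps)"
    "(\<lambda>x. sum_list (map (\<lambda>p. F p x) ps)) differentiable at x"
  using pd_sum_list_aux[of ps F x i] assms by auto

lemma pd_const: "partial_deriv i (\<lambda>x::real^'n::finite. c::real) x = 0"
  by (simp add: partial_deriv_def frechet_derivative_const)

lemma smooth_const: "open S \<Longrightarrow> smooth_on S (\<lambda>x::real^'n::finite. c::real)"
  by (rule smooth_coinduct[where X="{\<lambda>x. c'| c'::real. True}"]) (auto simp: pd_const)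

lemma pd_coord: "partial_deriv i (\<lambda>x::real^'n::finite. x$j) x = (if i = j then 1 else 0)"
proof -
  have "((\<lambda>x::real^'n. x$j) has_derivative (\<lambda>x. x$j)) (at x)"
    using bounded_linear.has_derivative[OF bounded_linear_vec_nth has_derivative_id] by simp
  from partial_deriv_eq[OF this] show ?thesis by (simp add: axis_def)
qed

lemma smooth_coord: 
  assumes "open S" shows "smooth_on S (\<lambda>x::real^'n::finite. x$j)"
proof (rule smooth_coinduct[OF assms, where X="{\<lambda>x. x$j} \<union> {\<lambda>x. c'| c'::real. True}"])
  fix f assume "f \<in> {\<lambda>x. x$j} \<union> {\<lambda>x. c'| c'::real. True}"
  then show "f differentiable_on S"
    by (auto simp: bounded_linear_imp_differentiable_on bounded_linear_vec_nth)
next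
  fix f i assume "f \<in> {\<lambda>x. x$j} \<union> {\<lambda>x. c'| c'::real. True}"
  then show "\<exists>g\<in>{\<lambda>x. x$j} \<union> {\<lambda>x. c'| c'::real. True}. \<forall>x\<in>S. partial_deriv i f x = g x"
  proof
    assume "f \<in> {\<lambda>x. x$j}"
    then show ?thesis by (intro bexI[where x="\<lambda>x. if i = j then 1 else 0"]) (auto simp: pd_coord)
  next
    assume "f \<in> {\<lambda>x. c'| c'::real. True}"
    then show ?thesis by (intro bexI[where x="\<lambda>x. 0"]) (auto simp: pd_const)
  qed
qed simp

lemma smooth_mult_list:
  fixes S :: "(real^'n::finite) set"
  assumes "open S" "\<forall>(f,g)\<in>set ps. smooth_on S f \<and> smooth_on S g"
  shows "smooth_on S (\<lambda>x. sum_list (map (\<lambda>(f,g). f x * g x) ps))"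
proof (rule smooth_coinduct[OF assms(1)])
  let ?X = "{(\<lambda>x. sum_list (map (\<lambda>(f,g). f x * g x) ps)) | ps. \<forall>(f,g)\<in>set ps. smooth_on S f \<and> smooth_on S g}"
  show "(\<lambda>x. sum_list (map (\<lambda>(f,g). f x * g x) ps)) \<in> ?X" using assms(2) by blast
  have dterm: "(\<lambda>x. f x * g x) differentiable at x" if "smooth_on S f" "smooth_on S g" "x \<in> S" for f g x
    using smooth_on_diff_at[OF that(1) assms(1) that(3)] smooth_on_diff_at[OF that(2) assms(1) that(3)] by simp
  fix h assume "h \<in> ?X"
  then obtain qs where qs: "h = (\<lambda>x. sum_list (map (\<lambda>(f,g). f x * g x) qs))"
    "\<forall>(f,g)\<in>set qs. smooth_on S f \<and> smooth_on S g" by blast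
  have dq: "\<And>p x. p \<in> set qs \<Longrightarrow> x \<in> S \<Longrightarrow> (\<lambda>x. (case p of (f,g) \<Rightarrow> f x * g x)) differentiable at x"
    using qs(2) dterm by fastforce
  show "h differentiable_on S"
    unfolding qs(1)
    by (rule differentiable_on_open_local[OF assms(1)]) (use pd_sum_list(2)[of qs "\<lambda>p x. case p of (f,g) \<Rightarrow> f x * g x"] dq in auto)
  fix i
  let ?qs' = "concat (map (\<lambda>(f,g). [(partial_deriv i f, g), (f, partial_deriv i g)]) qs)"
  have "?qs' \<in> {ps. \<forall>(f,g)\<in>set ps. smooth_on S f \<and> smooth_on S g}"
    using qs(2) by (auto simp: smooth_on_partial)
  moreover have "\<forall>x\<in>S. partial_deriv i h x = sum_list (map (\<lambda>(f,g). f x * g x) ?qs')"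
  proof
    fix x assume x: "x \<in> S"
    have "partial_deriv i h x = sum_list (map (\<lambda>p. partial_deriv i (\<lambda>x. case p of (f,g) \<Rightarrow> f x * g x) x) qs)"
      unfolding qs(1) using pd_sum_list(1)[of qs "\<lambda>p x. case p of (f,g) \<Rightarrow> f x * g x"] dq x
      by (simp add: case_prod_unfold)
    also have "\<dots> = sum_list (map (\<lambda>(f,g). partial_deriv i f x * g x + f x * partial_deriv i g x) qs)"
    proof (rule arg_cong[where f=sum_list], rule map_cong[OF refl])
      fix p assume "p \<in> set qs"
      then obtain f g where p: "p = (f,g)" "smooth_on S f" "smooth_on S g" using qs(2) by (cases p) auto
      show "partial_deriv i (\<lambda>x. case p of (f,g) \<Rightarrow> f x * g x) x = (case p of (f,g) \<Rightarrow> partial_deriv i f x * g x + f x * partial_deriv i g x)"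
        using pd_mult[OF smooth_on_diff_at[OF p(2) assms(1) x] smooth_on_diff_at[OF p(3) assms(1) x]] p(1) by simp
    qed
    also have "\<dots> = sum_list (map (\<lambda>(f,g). f x * g x) ?qs')"
      by (induction qs) auto
    finally show "partial_deriv i h x = sum_list (map (\<lambda>(f,g). f x * g x) ?qs')" .
  qed
  ultimately show "\<exists>g\<in>?X. \<forall>x\<in>S. partial_deriv i h x = g x"
    by (intro bexI[where x="\<lambda>x. sum_list (map (\<lambda>(f,g). f x * g x) ?qs')"]) blast+
qed

lemma smooth_mult:
  assumes "open S" "smooth_on S f" "smooth_on S g"
  shows "smooth_on S (\<lambda>x. f x * g x)"
  using smooth_mult_list[OF assms(1), of "[(f,g)]"] assms by simp

lemma smooth_add:
  assumes "open S" "smooth_on S f" "smooth_on S g"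
  shows "smooth_on S (\<lambda>x. f x + g x)"
  using smooth_mult_list[OF assms(1), of "[(f,\<lambda>x. 1),(g,\<lambda>x. 1)]"] assms smooth_const[OF assms(1)] by simp

lemma smooth_scale:
  assumes "open S" "smooth_on S f"
  shows "smooth_on S (\<lambda>x. c * f x)"
  using smooth_mult[OF assms(1) smooth_const[OF assms(1)] assms(2)] .

lemma smooth_neg:
  assumes "open S" "smooth_on S f"
  shows "smooth_on S (\<lambda>x. - f x)"
  using smooth_scale[OF assms, of "-1"] by simp

lemma smooth_diff:
  assumes "open S" "smooth_on S f" "smooth_on S g"
  shows "smooth_on S (\<lambda>x. f x - g x)"
  using smooth_add[OF assms(1,2) smooth_neg[OF assms(1,3)]] by simp

lemma smooth_sum:
  assumes "open S" "finite F" "\<And>k. k \<in> F \<Longrightarrow> smooth_on S (f k)"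
  shows "smooth_on S (\<lambda>x. \<Sum>k\<in>F. f k x)"
  using assms(2,3)
proof (induction F rule: finite_induct)
  case empty then show ?case using smooth_const[OF assms(1), of 0] by simp
next
  case (insert a F) then show ?case using smooth_add[OF assms(1)] by simp
qed

definition smooth1 :: "real set \<Rightarrow> (real \<Rightarrow> real) \<Rightarrow> bool" where
  "smooth1 V P \<longleftrightarrow> (\<exists>ds. ds 0 = P \<and> (\<forall>n. \<forall>t\<in>V. (ds n has_real_derivative ds (Suc n) t) (at t)))"

lemma smooth_comp:
  fixes S :: "(real^'n::finite) set"
  assumes S: "open S" and u: "smooth_on S u" and uV: "\<And>x. x \<in> S \<Longrightarrow> u x \<in> V" and P: "smooth1 V P"
  shows "smooth_on S (\<lambda>x. P (u x))"
proof -
  obtain ds where ds: "ds 0 = P" "\<And>n t. t \<in> V \<Longrightarrow> (ds n has_real_derivative ds (Suc n) t) (at t)"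
    using P unfolding smooth1_def by blast
  let ?X = "{(\<lambda>x. sum_list (map (\<lambda>(n,g). ds n (u x) * g x) ps)) | ps. \<forall>(n,g)\<in>set ps. smooth_on S g}"
  have du: "u differentiable at x" if "x \<in> S" for x using smooth_on_diff_at[OF u S that] .
  have dterm: "(\<lambda>x. ds n (u x) * g x) differentiable at x"
    and pterm: "partial_deriv i (\<lambda>x. ds n (u x) * g x) x = ds (Suc n) (u x) * (partial_deriv i u x * g x) + ds n (u x) * partial_deriv i g x"
    if "smooth_on S g" "x \<in> S" for n g x i
  proof -
    have dc: "(\<lambda>x. ds n (u x)) differentiable at x" "partial_deriv i (\<lambda>x. ds n (u x)) x = ds (Suc n) (u x) * partial_deriv i u x"
      using pd_comp[OF ds(2)[OF uV[OF that(2)]] du[OF that(2)]] by auto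
    have dg: "g differentiable at x" using smooth_on_diff_at[OF that(1) S that(2)] .
    show "(\<lambda>x. ds n (u x) * g x) differentiable at x" using dc dg by simp
    show "partial_deriv i (\<lambda>x. ds n (u x) * g x) x = ds (Suc n) (u x) * (partial_deriv i u x * g x) + ds n (u x) * partial_deriv i g x"
      using pd_mult[OF dc(1) dg] dc(2) by (simp add: algebra_simps)
  qed
  have "smooth_on S (\<lambda>x. sum_list (map (\<lambda>(n,g). ds n (u x) * g x) [(0, \<lambda>x. 1)]))"
  proof (rule smooth_coinduct[OF S, where X="?X"])
    show "(\<lambda>x. sum_list (map (\<lambda>(n,g). ds n (u x) * g x) [(0, \<lambda>x. 1)])) \<in> ?X"
      using smooth_const[OF S, of 1] by (intro CollectI exI[where x="[(0, \<lambda>x. 1)]"]) auto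
    fix h assume "h \<in> ?X"
    then obtain qs where qs: "h = (\<lambda>x. sum_list (map (\<lambda>(n,g). ds n (u x) * g x) qs))"
      "\<forall>(n,g)\<in>set qs. smooth_on S g" by blast
    have dq: "\<And>p x. p \<in> set qs \<Longrightarrow> x \<in> S \<Longrightarrow> (\<lambda>x. (case p of (n,g) \<Rightarrow> ds n (u x) * g x)) differentiable at x"
      using qs(2) dterm by fastforce
    show "h differentiable_on S"
      unfolding qs(1)
      by (rule differentiable_on_open_local[OF S]) (use pd_sum_list(2)[of qs "\<lambda>p x. case p of (n,g) \<Rightarrow> ds n (u x) * g x"] dq in auto)
    fix i
    let ?qs' = "concat (map (\<lambda>(n,g). [(Suc n, \<lambda>x. partial_deriv i u x * g x), (n, partial_deriv i g)]) qs)"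
    have "\<forall>(n,g)\<in>set ?qs'. smooth_on S g"
      using qs(2) by (auto simp: smooth_on_partial intro!: smooth_mult[OF S] smooth_on_partial[OF u])
    moreover have "\<forall>x\<in>S. partial_deriv i h x = sum_list (map (\<lambda>(n,g). ds n (u x) * g x) ?qs')"
    proof
      fix x assume x: "x \<in> S"
      have "partial_deriv i h x = sum_list (map (\<lambda>p. partial_deriv i (\<lambda>x. case p of (n,g) \<Rightarrow> ds n (u x) * g x) x) qs)"
        unfolding qs(1) using pd_sum_list(1)[of qs "\<lambda>p x. case p of (n,g) \<Rightarrow> ds n (u x) * g x"] dq x
        by (simp add: case_prod_unfold)
      also have "\<dots> = sum_list (map (\<lambda>(n,g). ds (Suc n) (u x) * (partial_deriv i u x * g x) + ds n (u x) * partial_deriv i g x) qs)"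
      proof (rule arg_cong[where f=sum_list], rule map_cong[OF refl])
        fix p assume "p \<in> set qs"
        then obtain n g where p: "p = (n,g)" "smooth_on S g" using qs(2) by (cases p) auto
        show "partial_deriv i (\<lambda>x. case p of (n,g) \<Rightarrow> ds n (u x) * g x) x = (case p of (n,g) \<Rightarrow> ds (Suc n) (u x) * (partial_deriv i u x * g x) + ds n (u x) * partial_deriv i g x)"
          using pterm[OF p(2) x] p(1) by simp
      qed
      also have "\<dots> = sum_list (map (\<lambda>(n,g). ds n (u x) * g x) ?qs')"
        by (induction qs) auto
      finally show "partial_deriv i h x = sum_list (map (\<lambda>(n,g). ds n (u x) * g x) ?qs')" .
    qed
    ultimately show "\<exists>g\<in>?X. \<forall>x\<in>S. partial_deriv i h x = g x"
      by (intro bexI[where x="\<lambda>x. sum_list (map (\<lambda>(n,g). ds n (u x) * g x) ?qs')"]) blast+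
  qed
  then show ?thesis using ds(1) by simp
qed

lemma smooth1_powr: "smooth1 {0<..} (\<lambda>t. t powr a)"
  unfolding smooth1_def
proof (intro exI[where x="\<lambda>n t. (\<Prod>k<n. (a - real k)) * t powr (a - real n)"] conjI allI ballI)
  fix n and t :: real assume "t \<in> {0<..}"
  then have t: "t > 0" by simp
  have "((\<lambda>t. t powr (a - real n)) has_real_derivative (a - real n) * t powr (a - real n - 1)) (at t)"
    using t by (intro derivative_eq_intros) (auto simp: field_simps)
  then have "((\<lambda>t. (\<Prod>k<n. (a - real k)) * t powr (a - real n)) has_real_derivative
      (\<Prod>k<n. (a - real k)) * ((a - real n) * t powr (a - real n - 1))) (at t)"
    by (rule DERIV_cmult)
  moreover have "(\<Prod>k<n. (a - real k)) * ((a - real n) * t powr (a - real n - 1)) =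
      (\<Prod>k<Suc n. (a - real k)) * t powr (a - real (Suc n))"
    by (simp add: algebra_simps)
  ultimately show "((\<lambda>t. (\<Prod>k<n. (a - real k)) * t powr (a - real n)) has_real_derivative
      (\<Prod>k<Suc n. (a - real k)) * t powr (a - real (Suc n))) (at t)" by simp
qed simp

lemma smooth_powr:
  fixes S :: "(real^'n::finite) set"
  assumes "open S" "smooth_on S u" "\<And>x. x \<in> S \<Longrightarrow> u x > 0"
  shows "smooth_on S (\<lambda>x. u x powr a)"
  using smooth_comp[OF assms(1,2) _ smooth1_powr] assms(3) by simp

lemma smooth_inverse:
  fixes S :: "(real^'n::finite) set"
  assumes "open S" "smooth_on S u" "\<And>x. x \<in> S \<Longrightarrow> u x > 0"
  shows "smooth_on S (\<lambda>x. 1 / u x)"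
proof (rule smooth_on_cong[OF assms(1) smooth_powr[OF assms, of "-1"]])
  fix x assume "x \<in> S" then show "1 / u x = u x powr - 1" using assms(3)[of x] by (simp add: powr_minus_divide)
qed

lemma poly_exp_tendsto: "((\<lambda>s::real. poly p s * exp (- s)) \<longlongrightarrow> 0) at_top"
proof -
  have "((\<lambda>s::real. \<Sum>i\<le>degree p. coeff p i * (s ^ i / exp s)) \<longlongrightarrow> (\<Sum>i\<le>degree p. coeff p i * 0)) at_top"
    by (intro tendsto_sum tendsto_mult tendsto_const tendsto_power_div_exp_0)
  moreover have "poly p s * exp (- s) = (\<Sum>i\<le>degree p. coeff p i * (s ^ i / exp s))" for s :: real
    by (simp add: poly_altdef exp_minus divide_inverse sum_distrib_right mult.assoc)
  ultimately show ?thesis by simp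
qed

fun bumpQ :: "nat \<Rightarrow> real poly" where
  "bumpQ 0 = 1"
| "bumpQ (Suc n) = [:0,0,1:] * (bumpQ n - pderiv (bumpQ n))"

definition bumpd :: "nat \<Rightarrow> real \<Rightarrow> real" where
  "bumpd n t = (if t \<le> 0 then 0 else poly (bumpQ n) (1/t) * exp (- (1/t)))"

definition bump :: "real \<Rightarrow> real" where
  "bump t = (if t \<le> 0 then 0 else exp (- (1/t)))"

lemma bumpd_deriv_pos:
  assumes t: "t > 0"
  shows "((\<lambda>t. poly q (1/t) * exp (- (1/t))) has_real_derivative
     poly ([:0,0,1:] * (q - pderiv q)) (1/t) * exp (- (1/t))) (at t)"
proof -
  have d1: "((\<lambda>t. 1/t) has_real_derivative (- ((1/t)^2))) (at t)"
    using t by (auto intro!: derivative_eq_intros simp: power2_eq_square field_simps)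
  have d2: "((\<lambda>t. poly q (1/t)) has_real_derivative poly (pderiv q) (1/t) * (- ((1/t)^2))) (at t)"
    by (rule DERIV_chain2[OF poly_DERIV d1])
  have d3: "((\<lambda>t. exp (- (1/t))) has_real_derivative exp (- (1/t)) * (- (- ((1/t)^2)))) (at t)"
    by (rule DERIV_chain2[OF DERIV_exp DERIV_minus[OF d1]])
  have "((\<lambda>t. poly q (1/t) * exp (- (1/t))) has_real_derivative
     poly (pderiv q) (1/t) * (- ((1/t)^2)) * exp (- (1/t)) + (exp (- (1/t)) * (- (- ((1/t)^2)))) * poly q (1/t)) (at t)"
    by (rule DERIV_mult[OF d2 d3])
  moreover have "poly (pderiv q) (1/t) * (- ((1/t)^2)) * exp (- (1/t)) + (exp (- (1/t)) * (- (- ((1/t)^2)))) * poly q (1/t)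
     = poly ([:0,0,1:] * (q - pderiv q)) (1/t) * exp (- (1/t))"
    by (simp add: algebra_simps power2_eq_square)
  ultimately show ?thesis by simp
qed

lemma bumpd_deriv: "(bumpd n has_real_derivative bumpd (Suc n) t) (at t)"
proof (cases t "0::real" rule: linorder_cases)
  case less
  have "((\<lambda>t. 0) has_real_derivative 0) (at t)" by simp
  then have "(bumpd n has_real_derivative 0) (at t)"
    by (rule has_field_derivative_transform_within_open[where S="{..<0}"]) (use less in \<open>auto simp: bumpd_def\<close>)
  then show ?thesis using less by (simp add: bumpd_def)
next
  case greater
  have "(bumpd n has_real_derivative poly ([:0,0,1:] * (bumpQ n - pderiv (bumpQ n))) (1/t) * exp (- (1/t))) (at t)"
    by (rule has_field_derivative_transform_within_open[OF bumpd_deriv_pos[OF greater, of "bumpQ n"], where S="{0<..}"])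
       (use greater in \<open>auto simp: bumpd_def\<close>)
  then show ?thesis using greater by (simp add: bumpd_def)
next
  case equal
  have "((\<lambda>y. (bumpd n y - bumpd n 0) / (y - 0)) \<longlongrightarrow> 0) (at 0)"
  proof (rule filterlim_split_at)
    have "eventually (\<lambda>y. (bumpd n y - bumpd n 0) / (y - 0) = 0) (at_left (0::real))"
      by (auto simp: eventually_at_left_real[of "-1" 0] bumpd_def intro: eventually_mono[OF eventually_at_left_real[of "-1" 0]])
    then show "((\<lambda>y. (bumpd n y - bumpd n 0) / (y - 0)) \<longlongrightarrow> 0) (at_left 0)"
      by (rule tendsto_eventually)
    have lim: "((\<lambda>y. poly ([:0,1:] * bumpQ n) (inverse y) * exp (- (inverse y))) \<longlongrightarrow> 0) (at_right (0::real))"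
      by (rule filterlim_compose[OF poly_exp_tendsto filterlim_inverse_at_top_right])
    have "eventually (\<lambda>y. poly ([:0,1:] * bumpQ n) (inverse y) * exp (- (inverse y)) = (bumpd n y - bumpd n 0) / (y - 0)) (at_right (0::real))"
      by (rule eventually_mono[OF eventually_at_right_real[of 0 1]]) (auto simp: bumpd_def field_simps)
    then show "((\<lambda>y. (bumpd n y - bumpd n 0) / (y - 0)) \<longlongrightarrow> 0) (at_right 0)"
      using lim by (rule Lim_transform_eventually[rotated])
  qed
  then have "(bumpd n has_real_derivative 0) (at 0)" by (simp add: has_field_derivative_iff)
  then show ?thesis using equal by (simp add: bumpd_def)
qed

lemma smooth1_bump: "smooth1 UNIV bump"
  unfolding smooth1_def
proof (intro exI[where x=bumpd] conjI allI ballI)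
  show "bumpd 0 = bump" by (auto simp: bump_def bumpd_def fun_eq_iff)
qed (rule bumpd_deriv)

lemma bump_pos: "t > 0 \<Longrightarrow> bump t > 0" and bump_nonneg: "bump t \<ge> 0"
  and bump_zero: "t \<le> 0 \<Longrightarrow> bump t = 0"
  by (auto simp: bump_def)

lemma line_deriv:
  fixes f :: "real^'n::finite \<Rightarrow> real"
  assumes "f differentiable at (x + t *\<^sub>R v)"
  shows "((\<lambda>t. f (x + t *\<^sub>R v)) has_real_derivative (\<Sum>i\<in>UNIV. v$i * partial_deriv i f (x + t *\<^sub>R v))) (at t)"
proof -
  have d1: "((\<lambda>t. x + t *\<^sub>R v) has_derivative (\<lambda>h. h *\<^sub>R v)) (at t)"
    by (auto intro!: derivative_eq_intros)
  have "((\<lambda>t. f (x + t *\<^sub>R v)) has_derivative (\<lambda>h. \<Sum>i\<in>UNIV. (h *\<^sub>R v)$i * partial_deriv i f (x + t *\<^sub>R v))) (at t)"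
    using has_derivative_compose[OF d1 has_derivative_partials[OF assms]] by (simp add: o_def)
  moreover have "(\<lambda>h. \<Sum>i\<in>UNIV. (h *\<^sub>R v)$i * partial_deriv i f (x + t *\<^sub>R v)) = (*) (\<Sum>i\<in>UNIV. v$i * partial_deriv i f (x + t *\<^sub>R v))"
    by (simp add: fun_eq_iff sum_distrib_left algebra_simps)
  ultimately show ?thesis by (simp add: has_field_derivative_def)
qed

lemma line_derivs:
  fixes f :: "real^'n::finite \<Rightarrow> real"
  assumes S: "open S" and f: "smooth_on S f" and z: "x + t *\<^sub>R v \<in> S"
  shows "((\<lambda>t. f (x + t *\<^sub>R v)) has_real_derivative (\<Sum>i\<in>UNIV. v$i * partial_deriv i f (x + t *\<^sub>R v))) (at t)"
    "((\<lambda>t. \<Sum>i\<in>UNIV. v$i * partial_deriv i f (x + t *\<^sub>R v)) has_real_derivative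
        (\<Sum>i\<in>UNIV. v$i * (\<Sum>j\<in>UNIV. v$j * iter_partial [j,i] f (x + t *\<^sub>R v)))) (at t)"
proof -
  show "((\<lambda>t. f (x + t *\<^sub>R v)) has_real_derivative (\<Sum>i\<in>UNIV. v$i * partial_deriv i f (x + t *\<^sub>R v))) (at t)"
    by (rule line_deriv[OF smooth_on_diff_at[OF f S z]])
  have "((\<lambda>t. partial_deriv i f (x + t *\<^sub>R v)) has_real_derivative (\<Sum>j\<in>UNIV. v$j * iter_partial [j,i] f (x + t *\<^sub>R v))) (at t)" for i
    using line_deriv[OF smooth_on_diff_at[OF smooth_on_partial[OF f] S z]] by simp
  then show "((\<lambda>t. \<Sum>i\<in>UNIV. v$i * partial_deriv i f (x + t *\<^sub>R v)) has_real_derivative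
        (\<Sum>i\<in>UNIV. v$i * (\<Sum>j\<in>UNIV. v$j * iter_partial [j,i] f (x + t *\<^sub>R v)))) (at t)"
    by (intro DERIV_sum DERIV_cmult)
qed

lemma convex_on_lines:
  fixes f :: "'a::real_vector \<Rightarrow> real"
  assumes "convex W" "\<And>x y. x \<in> W \<Longrightarrow> y \<in> W \<Longrightarrow> convex_on {0..1} (\<lambda>t. f (x + t *\<^sub>R (y - x)))"
  shows "convex_on W f"
proof -
  have *: "f ((1 - t) *\<^sub>R x + t *\<^sub>R y) \<le> (1 - t) * f x + t * f y"
    if t: "t \<ge> 0" "t \<le> 1" and xy: "x \<in> W" "y \<in> W" for t :: real and x y
  proof -
    have "(\<lambda>t. f (x + t *\<^sub>R (y - x))) ((1 - t) *\<^sub>R 0 + t *\<^sub>R 1) \<le> (1 - t) * (\<lambda>t. f (x + t *\<^sub>R (y - x))) 0 + t * (\<lambda>t. f (x + t *\<^sub>R (y - x))) 1"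
      using convex_onD[OF assms(2)[OF xy], of t 0 1] t by auto
    moreover have "x + t *\<^sub>R (y - x) = (1 - t) *\<^sub>R x + t *\<^sub>R y" by (simp add: algebra_simps)
    ultimately show ?thesis by simp
  qed
  show ?thesis unfolding convex_on_def
  proof (intro conjI assms(1) ballI allI impI)
    fix x y and u v :: real assume xy: "x \<in> W" "y \<in> W" and uv: "u \<ge> 0" "v \<ge> 0" "u + v = 1"
    then have "u = 1 - v" by simp
    then show "f (u *\<^sub>R x + v *\<^sub>R y) \<le> u * f x + v * f y"
      using * [of v x y] uv xy by (simp only:)
  qed
qed

lemma segment_in_convex:
  "convex W \<Longrightarrow> x \<in> W \<Longrightarrow> y \<in> W \<Longrightarrow> t \<in> {0..1} \<Longrightarrow> x + t *\<^sub>R (y - x) \<in> W"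
  using convexD[of W x y "1 - t" t] by (auto simp: algebra_simps)

lemma norm_line_sq:
  fixes x v :: "'a::real_inner"
  shows "norm (x + t *\<^sub>R v) ^ 2 = norm x ^ 2 + 2 * t * (x \<bullet> v) + t^2 * norm v ^ 2"
  by (simp only: power2_norm_eq_inner) (simp add: inner_add_left inner_add_right inner_commute algebra_simps power2_eq_square)

lemma negL_line_derivs:
  fixes x v :: "real^'n::finite"
  assumes q_def: "q = (\<lambda>t. 1 - (norm x ^ 2 + 2 * t * (x \<bullet> v) + t^2 * norm v ^ 2))"
  and a_def: "a = (\<lambda>t. x \<bullet> v + t * norm v ^ 2)"
  and q: "q t > 0"
  shows "((\<lambda>t. - sqrt (q t)) has_real_derivative a t / sqrt (q t)) (at t)"
    "((\<lambda>t. a t / sqrt (q t)) has_real_derivative norm v ^ 2 / sqrt (q t) + (a t)^2 / (q t * sqrt (q t))) (at t)"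
proof -
  have dq: "(q has_real_derivative - 2 * a t) (at t)"
    unfolding q_def a_def by (auto intro!: derivative_eq_intros simp: algebra_simps)
  have ds: "((\<lambda>t. sqrt (q t)) has_real_derivative - a t / sqrt (q t)) (at t)"
    using DERIV_chain2[OF DERIV_real_sqrt[OF q] dq] q by (simp add: field_simps)
  show "((\<lambda>t. - sqrt (q t)) has_real_derivative a t / sqrt (q t)) (at t)"
    using DERIV_minus[OF ds] by simp
  have da: "(a has_real_derivative norm v ^ 2) (at t)"
    unfolding a_def by (auto intro!: derivative_eq_intros)
  have sq: "sqrt (q t) > 0" using q by simp
  have "((\<lambda>t. a t / sqrt (q t)) has_real_derivative
     (norm v ^ 2 * sqrt (q t) - (- a t / sqrt (q t)) * a t) / (sqrt (q t) * sqrt (q t))) (at t)"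
    using DERIV_divide[OF da ds] sq by simp
  moreover have "(norm v ^ 2 * sqrt (q t) - (- a t / sqrt (q t)) * a t) / (sqrt (q t) * sqrt (q t))
      = norm v ^ 2 / sqrt (q t) + (a t)^2 / (q t * sqrt (q t))"
    using sq q by (simp add: field_simps power2_eq_square)
  ultimately show "((\<lambda>t. a t / sqrt (q t)) has_real_derivative norm v ^ 2 / sqrt (q t) + (a t)^2 / (q t * sqrt (q t))) (at t)"
    by simp
qed

lemma L_line: "L (x + t *\<^sub>R v) = sqrt (1 - (norm x ^ 2 + 2 * t * (x \<bullet> v) + t^2 * norm v ^ 2))"
  unfolding L_def norm_line_sq ..

lemma hess_bound:
  fixes v :: "real^'n::finite"
  assumes "\<And>i j. \<bar>h i j\<bar> \<le> M"
  shows "(\<Sum>i\<in>UNIV. v$i * (\<Sum>j\<in>UNIV. v$j * h i j)) \<ge> - (real CARD('n)^2 * M * norm v ^ 2)"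
proof -
  have M: "M \<ge> 0" using assms[of undefined undefined] by linarith
  have "\<bar>\<Sum>i\<in>UNIV. v$i * (\<Sum>j\<in>UNIV. v$j * h i j)\<bar> \<le> (\<Sum>i\<in>(UNIV::'n set). (\<Sum>j\<in>(UNIV::'n set). M * norm v ^ 2))"
  proof -
    have "\<bar>\<Sum>i\<in>UNIV. v$i * (\<Sum>j\<in>UNIV. v$j * h i j)\<bar> \<le> (\<Sum>i\<in>UNIV. \<bar>v$i * (\<Sum>j\<in>UNIV. v$j * h i j)\<bar>)"
      by (rule sum_abs)
    also have "\<dots> \<le> (\<Sum>i\<in>(UNIV::'n set). (\<Sum>j\<in>(UNIV::'n set). M * norm v ^ 2))"
    proof (rule sum_mono)
      fix i
      have "\<bar>v$i * (\<Sum>j\<in>UNIV. v$j * h i j)\<bar> = \<bar>v$i\<bar> * \<bar>\<Sum>j\<in>UNIV. v$j * h i j\<bar>" by (simp add: abs_mult)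
      also have "\<dots> \<le> norm v * (\<Sum>j\<in>(UNIV::'n set). norm v * M)"
      proof (rule mult_mono)
        show "\<bar>v$i\<bar> \<le> norm v" by (rule component_le_norm_cart)
        have "\<bar>\<Sum>j\<in>UNIV. v$j * h i j\<bar> \<le> (\<Sum>j\<in>UNIV. \<bar>v$j * h i j\<bar>)" by (rule sum_abs)
        also have "\<dots> \<le> (\<Sum>j\<in>(UNIV::'n set). norm v * M)"
          by (rule sum_mono) (simp add: abs_mult mult_mono component_le_norm_cart assms M)
        finally show "\<bar>\<Sum>j\<in>UNIV. v$j * h i j\<bar> \<le> (\<Sum>j\<in>(UNIV::'n set). norm v * M)" .
      qed (use M in \<open>auto intro: sum_nonneg\<close>)
      also have "\<dots> = (\<Sum>j\<in>(UNIV::'n set). M * norm v ^ 2)"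
        by (simp add: sum_distrib_left power2_eq_square algebra_simps)
      finally show "\<bar>v$i * (\<Sum>j\<in>UNIV. v$j * h i j)\<bar> \<le> (\<Sum>j\<in>(UNIV::'n set). M * norm v ^ 2)" .
    qed
    finally show ?thesis .
  qed
  also have "\<dots> = real CARD('n)^2 * M * norm v ^ 2" by (simp add: power2_eq_square)
  finally show ?thesis by linarith
qed

lemma convex_hessian:
  fixes f :: "real^'n::finite \<Rightarrow> real"
  assumes S: "open S" and W: "W \<subseteq> S" "convex W" "W \<subseteq> ball 0 1" and f: "smooth_on S f"
    and H: "\<And>z i j. z \<in> W \<Longrightarrow> \<bar>iter_partial [j,i] f z\<bar> \<le> M"
    and c: "c \<ge> real CARD('n)^2 * M"
  shows "convex_on W (\<lambda>z. f z - c * L z)"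
proof (rule convex_on_lines[OF W(2)])
  fix x y assume xy: "x \<in> W" "y \<in> W"
  define v where "v = y - x"
  define q where "q = (\<lambda>t. 1 - (norm x ^ 2 + 2 * t * (x \<bullet> v) + t^2 * norm v ^ 2))"
  define a where "a = (\<lambda>t. x \<bullet> v + t * norm v ^ 2)"
  have M: "M \<ge> 0" using H[OF xy(1), of undefined undefined] by linarith
  have Lq: "L (x + t *\<^sub>R v) = sqrt (q t)" for t unfolding q_def L_line ..
  have zW: "x + t *\<^sub>R v \<in> W" if "t \<in> {0..1}" for t
    unfolding v_def using segment_in_convex[OF W(2) xy that] .
  have qpos: "q t > 0" if "t \<in> {0..1}" for t
  proof -
    have "norm (x + t *\<^sub>R v) < 1" using zW[OF that] W(3) by auto
    then have "norm (x + t *\<^sub>R v) ^ 2 < 1" by (simp add: power_less_one_iff abs_less_iff)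
    then show ?thesis unfolding q_def norm_line_sq[symmetric] by simp
  qed
  have qle: "q t \<le> 1" for t unfolding q_def norm_line_sq[symmetric] by simp
  show "convex_on {0..1} (\<lambda>t. f (x + t *\<^sub>R (y - x)) - c * L (x + t *\<^sub>R (y - x)))"
    unfolding v_def[symmetric]
  proof (rule f''_ge0_imp_convex[where f' = "\<lambda>t. (\<Sum>i\<in>UNIV. v$i * partial_deriv i f (x + t *\<^sub>R v)) + c * (a t / sqrt (q t))"
        and f'' = "\<lambda>t. (\<Sum>i\<in>UNIV. v$i * (\<Sum>j\<in>UNIV. v$j * iter_partial [j,i] f (x + t *\<^sub>R v))) + c * (norm v ^ 2 / sqrt (q t) + (a t)^2 / (q t * sqrt (q t)))"])
    show "convex {0..1::real}" by simp
    fix t :: real assume t: "t \<in> {0..1}"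
    have zS: "x + t *\<^sub>R v \<in> S" using zW[OF t] W(1) by auto
    note d = line_derivs[OF S f zS] negL_line_derivs[OF q_def a_def qpos[OF t]]
    show "((\<lambda>t. f (x + t *\<^sub>R v) - c * L (x + t *\<^sub>R v)) has_real_derivative
       (\<Sum>i\<in>UNIV. v$i * partial_deriv i f (x + t *\<^sub>R v)) + c * (a t / sqrt (q t))) (at t)"
      unfolding Lq using DERIV_add[OF d(1) DERIV_cmult[OF d(3), of c]] by simp
    show "((\<lambda>t. (\<Sum>i\<in>UNIV. v$i * partial_deriv i f (x + t *\<^sub>R v)) + c * (a t / sqrt (q t))) has_real_derivative
       (\<Sum>i\<in>UNIV. v$i * (\<Sum>j\<in>UNIV. v$j * iter_partial [j,i] f (x + t *\<^sub>R v))) + c * (norm v ^ 2 / sqrt (q t) + (a t)^2 / (q t * sqrt (q t)))) (at t)"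
      using DERIV_add[OF d(2) DERIV_cmult[OF d(4), of c]] by simp
    have h1: "(\<Sum>i\<in>UNIV. v$i * (\<Sum>j\<in>UNIV. v$j * iter_partial [j,i] f (x + t *\<^sub>R v))) \<ge> - (real CARD('n)^2 * M * norm v ^ 2)"
      by (rule hess_bound) (use H[OF zW[OF t]] in auto)
    have sq: "sqrt (q t) > 0" "sqrt (q t) \<le> 1" using qpos[OF t] qle[of t] by auto
    have "norm v ^ 2 / sqrt (q t) \<ge> norm v ^ 2"
      using sq mult_left_mono[OF sq(2), of "norm v ^ 2"] by (simp add: le_divide_eq)
    moreover have "(a t)^2 / (q t * sqrt (q t)) \<ge> 0" using sq qpos[OF t] by simp
    ultimately have "norm v ^ 2 / sqrt (q t) + (a t)^2 / (q t * sqrt (q t)) \<ge> norm v ^ 2" by linarith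
    moreover have "c \<ge> 0" using c M by (meson order_trans zero_le_mult_iff zero_le_power2 of_nat_0_le_iff)
    ultimately have "c * (norm v ^ 2 / sqrt (q t) + (a t)^2 / (q t * sqrt (q t))) \<ge> c * norm v ^ 2"
      by (simp add: mult_left_mono)
    moreover have "c * norm v ^ 2 \<ge> real CARD('n)^2 * M * norm v ^ 2"
      using c by (simp add: mult_right_mono)
    ultimately show "0 \<le> (\<Sum>i\<in>UNIV. v$i * (\<Sum>j\<in>UNIV. v$j * iter_partial [j,i] f (x + t *\<^sub>R v))) + c * (norm v ^ 2 / sqrt (q t) + (a t)^2 / (q t * sqrt (q t)))"
      using h1 by linarith
  qed
qed

lemma convex_on_line_restrict:
  fixes f :: "'a::real_vector \<Rightarrow> real"
  assumes "convex_on B f" "convex I" "\<And>s. s \<in> I \<Longrightarrow> x + s *\<^sub>R v \<in> B"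
  shows "convex_on I (\<lambda>s. f (x + s *\<^sub>R v))"
  unfolding convex_on_def
proof (intro conjI assms(2) ballI allI impI)
  fix a b and u w :: real assume ab: "a \<in> I" "b \<in> I" and uw: "u \<ge> 0" "w \<ge> 0" "u + w = 1"
  have "x + (u *\<^sub>R a + w *\<^sub>R b) *\<^sub>R v = u *\<^sub>R (x + a *\<^sub>R v) + w *\<^sub>R (x + b *\<^sub>R v)"
    using uw(3) by (simp add: algebra_simps) (metis scaleR_add_left scaleR_one)
  moreover have "f (u *\<^sub>R (x + a *\<^sub>R v) + w *\<^sub>R (x + b *\<^sub>R v)) \<le> u * f (x + a *\<^sub>R v) + w * f (x + b *\<^sub>R v)"
    using assms(1) assms(3)[OF ab(1)] assms(3)[OF ab(2)] uw unfolding convex_on_def by blast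
  ultimately show "f (x + (u *\<^sub>R a + w *\<^sub>R b) *\<^sub>R v) \<le> u * f (x + a *\<^sub>R v) + w * f (x + b *\<^sub>R v)" by simp
qed

lemma convex_local_global:
  fixes f :: "real^'n::finite \<Rightarrow> real"
  assumes S: "open S" "convex S" and f: "smooth_on S f"
    and loc: "\<And>z. z \<in> S \<Longrightarrow> \<exists>\<delta>>0. convex_on (ball z \<delta>) f"
  shows "convex_on S f"
proof (rule convex_on_lines[OF S(2)])
  fix x y assume xy: "x \<in> S" "y \<in> S"
  define v where "v = y - x"
  define g1 where "g1 = (\<lambda>t. \<Sum>i\<in>UNIV. v$i * partial_deriv i f (x + t *\<^sub>R v))"
  define g2 where "g2 = (\<lambda>t. \<Sum>i\<in>UNIV. v$i * (\<Sum>j\<in>UNIV. v$j * iter_partial [j,i] f (x + t *\<^sub>R v)))"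
  have zS: "x + t *\<^sub>R v \<in> S" if "t \<in> {0..1}" for t
    unfolding v_def using segment_in_convex[OF S(2) xy that] .
  have d1: "((\<lambda>t. f (x + t *\<^sub>R v)) has_real_derivative g1 t) (at t)" if "x + t *\<^sub>R v \<in> S" for t
    unfolding g1_def using line_derivs(1)[OF S(1) f that] .
  have d2: "(g1 has_real_derivative g2 t) (at t)" if "x + t *\<^sub>R v \<in> S" for t
    unfolding g1_def g2_def using line_derivs(2)[OF S(1) f that] .
  have nonneg: "g2 t \<ge> 0" if t: "t \<in> {0..1}" for t
  proof (rule ccontr)
    assume neg: "\<not> g2 t \<ge> 0"
    obtain \<delta>1 where \<delta>1: "\<delta>1 > 0" "convex_on (ball (x + t *\<^sub>R v) \<delta>1) f" using loc[OF zS[OF t]] by blast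
    obtain \<delta>0 where \<delta>0: "\<delta>0 > 0" "ball (x + t *\<^sub>R v) \<delta>0 \<subseteq> S" using S(1) zS[OF t] open_contains_ball by blast
    define \<delta> where "\<delta> = min \<delta>0 \<delta>1"
    have \<delta>: "\<delta> > 0" "convex_on (ball (x + t *\<^sub>R v) \<delta>) f" "ball (x + t *\<^sub>R v) \<delta> \<subseteq> S"
      using \<delta>0 \<delta>1 convex_on_subset[OF \<delta>1(2), of "ball (x + t *\<^sub>R v) \<delta>"] unfolding \<delta>_def
      by (auto simp: subset_ball)
    define \<epsilon> where "\<epsilon> = \<delta> / (norm v + 1)"
    have \<epsilon>: "\<epsilon> > 0" unfolding \<epsilon>_def using \<delta>(1) by (intro divide_pos_pos) (auto intro: add_nonneg_pos)
    define I where "I = {t - \<epsilon> <..< t + \<epsilon>}"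
    have inB: "x + s *\<^sub>R v \<in> ball (x + t *\<^sub>R v) \<delta>" if "s \<in> I" for s
    proof -
      have "dist (x + t *\<^sub>R v) (x + s *\<^sub>R v) = norm ((t - s) *\<^sub>R v)"
        by (simp add: dist_norm algebra_simps)
      also have "\<dots> = \<bar>s - t\<bar> * norm v" by (simp add: abs_minus_commute)
      also have "\<dots> \<le> \<epsilon> * norm v" using that by (intro mult_right_mono) (auto simp: I_def)
      also have "\<dots> < \<delta>"
      proof -
        have np: "norm v + 1 > 0" using norm_ge_zero[of v] by linarith
        have "\<delta> / (norm v + 1) * norm v < \<delta> / (norm v + 1) * (norm v + 1)"
          using np \<delta>(1) by (intro mult_strict_left_mono) auto
        then show ?thesis unfolding \<epsilon>_def using np by simp
      qed
      finally show ?thesis by simp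
    qed
    have IS: "x + s *\<^sub>R v \<in> S" if "s \<in> I" for s using inB[OF that] \<delta>(3) by blast
    have conv: "convex_on I (\<lambda>s. f (x + s *\<^sub>R v))"
    proof (rule convex_on_line_restrict[OF \<delta>(2)])
      show "convex I" unfolding I_def by simp
    qed (rule inB)
    have intI: "interior I = I" unfolding I_def by simp
    have conI: "connected I" unfolding I_def by simp
    have tI: "t \<in> I" unfolding I_def using \<epsilon> by simp
    have dw: "((\<lambda>t. f (x + t *\<^sub>R v)) has_real_derivative g1 s) (at s within I)" if "s \<in> I" for s
      using d1[OF IS[OF that]] by (rule has_field_derivative_at_within)
    have mono: "g1 s \<ge> g1 t" if s: "s \<in> I" "s > t" for s
    proof -
      have "f (x + s *\<^sub>R v) - f (x + t *\<^sub>R v) \<ge> g1 t * (s - t)"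
        using convex_on_imp_above_tangent[OF conv conI _ s(1) dw[OF tI]] intI tI by simp
      moreover have "f (x + t *\<^sub>R v) - f (x + s *\<^sub>R v) \<ge> g1 s * (t - s)"
        using convex_on_imp_above_tangent[OF conv conI _ tI dw[OF s(1)]] intI s(1) by simp
      ultimately have "(g1 s - g1 t) * (s - t) \<ge> 0" by (simp add: algebra_simps)
      then show ?thesis using s(2) by (simp add: zero_le_mult_iff)
    qed
    obtain d where d: "d > 0" "\<And>h. h > 0 \<Longrightarrow> h < d \<Longrightarrow> g1 t > g1 (t + h)"
      using DERIV_neg_dec_right[OF d2[OF zS[OF t]]] neg by force
    define h where "h = min d \<epsilon> / 2"
    have h: "h > 0" "h < d" "h < \<epsilon>" unfolding h_def using d(1) \<epsilon> by auto
    have "t + h \<in> I" unfolding I_def using h by simp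
    then have "g1 (t + h) \<ge> g1 t" using mono h by simp
    then show False using d(2)[OF h(1,2)] by simp
  qed
  show "convex_on {0..1} (\<lambda>t. f (x + t *\<^sub>R (y - x)))"
    unfolding v_def[symmetric]
    by (rule f''_ge0_imp_convex[where f'=g1 and f''=g2]) (simp_all add: d1 d2 zS nonneg)
qed

lemma mi_scale_left: "mink_inner (c *\<^sub>R p) q = c * mink_inner p q"
  by (simp add: mink_inner_def algebra_simps)
lemma mi_scale_right: "mink_inner p (c *\<^sub>R q) = c * mink_inner p q"
  by (simp add: mink_inner_def algebra_simps)
lemma mi_add_left: "mink_inner (p + p') q = mink_inner p q + mink_inner p' q"
  by (simp add: mink_inner_def algebra_simps inner_add_left)
lemma mi_add_right: "mink_inner p (q + q') = mink_inner p q + mink_inner p q'"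
  by (simp add: mink_inner_def algebra_simps inner_add_right)
lemma mi_Pair: "mink_inner (x, 1) v = x \<bullet> fst v - snd v"
  by (simp add: mink_inner_def)

lemma O_plus_D:
  assumes "A \<in> O_plus"
  shows "linear A" "mink_inner (A p) (A q) = mink_inner p q"
    "mink_inner p p = -1 \<Longrightarrow> snd p > 0 \<Longrightarrow> snd (A p) > 0"
  using assms unfolding O_plus_def by blast+

lemma O_plus_inj:
  fixes A :: "'n::finite mink \<Rightarrow> 'n mink"
  assumes A: "A \<in> O_plus" shows "inj A"
proof -
  have lin: "linear A" using O_plus_D[OF A] by simp
  have "p = 0" if "A p = 0" for p
  proof -
    have "mink_inner p (fst p, - snd p) = mink_inner (A p) (A (fst p, - snd p))" using O_plus_D(2)[OF A] by simp
    also have "\<dots> = 0" using that by (simp add: mink_inner_def)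
    finally have "fst p \<bullet> fst p + snd p * snd p = 0" by (simp add: mink_inner_def)
    then have "fst p = 0" "snd p = 0"
      by (metis add_nonneg_eq_0_iff inner_eq_zero_iff inner_ge_zero mult_eq_0_iff zero_le_square)+
    then show "p = 0" by (simp add: prod_eq_iff)
  qed
  then show ?thesis using lin by (simp add: linear_inj_iff_eq_0)
qed

lemma O_plus_bij:
  fixes A :: "'n::finite mink \<Rightarrow> 'n mink"
  assumes A: "A \<in> O_plus" shows "bij A"
  using O_plus_inj[OF A] linear_injective_imp_surjective[OF O_plus_D(1)[OF A] O_plus_inj[OF A]]
  by (simp add: bij_def)

lemma O_plus_inv:
  fixes A :: "'n::finite mink \<Rightarrow> 'n mink"
  assumes A: "A \<in> O_plus" shows "inv A (A p) = p" "A (inv A p) = p" "inv A \<circ> A = id" "A \<circ> inv A = id"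
  using O_plus_bij[OF A] by (auto simp: bij_def inv_f_f surj_f_inv_f fun_eq_iff)

definition sc :: "('n::finite mink \<Rightarrow> 'n mink) \<Rightarrow> real^'n \<Rightarrow> real" where
  "sc A x = snd (A (x, 1))"

lemma L_pos: "norm (x::real^'n::finite) < 1 \<Longrightarrow> L x > 0"
proof -
  assume "norm x < 1"
  then have "norm x ^ 2 < 1" by (simp add: abs_square_less_1)
  then show ?thesis by (simp add: L_def)
qed

lemma L_le1: "L x \<le> 1" by (simp add: L_def)

lemma L_sq: "norm (x::real^'n::finite) < 1 \<Longrightarrow> (L x)^2 = 1 - norm x ^ 2"
  unfolding L_def by (simp add: abs_square_less_1 less_imp_le power_less_one_iff)

lemma mi_self_Pair: "mink_inner (x, 1) (x, 1) = norm x ^ 2 - 1"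
  by (simp add: mink_inner_def power2_norm_eq_inner)

lemma sc_pos:
  fixes A :: "'n::finite mink \<Rightarrow> 'n mink"
  assumes A: "A \<in> O_plus" and x: "norm x < 1"
  shows "sc A x > 0"
proof -
  have Lp: "L x > 0" using L_pos[OF x] .
  let ?p = "(1 / L x) *\<^sub>R (x, 1::real)"
  have "mink_inner ?p ?p = (1 / L x)^2 * (norm x ^ 2 - 1)"
    unfolding mi_scale_left mi_scale_right mi_self_Pair by (simp add: power2_eq_square)
  also have "\<dots> = -1" using L_sq[OF x] Lp by (simp add: field_simps)
  finally have "snd (A ?p) > 0" using O_plus_D(3)[OF A] Lp by simp
  moreover have "A ?p = (1 / L x) *\<^sub>R A (x, 1)" by (rule linear_scale[OF O_plus_D(1)[OF A]])
  ultimately have "snd (A (x, 1)) / L x > 0" by simp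
  then show ?thesis using Lp by (simp add: sc_def zero_less_divide_iff)
qed

lemma A_Pair:
  fixes A :: "'n::finite mink \<Rightarrow> 'n mink"
  assumes A: "A \<in> O_plus" and x: "norm x < 1"
  shows "A (x, 1) = sc A x *\<^sub>R (klein_act A x, 1)"
  using sc_pos[OF A x] by (simp add: sc_def klein_act_def prod_eq_iff)

lemma klein_act_props:
  fixes A :: "'n::finite mink \<Rightarrow> 'n mink"
  assumes A: "A \<in> O_plus" and x: "norm x < 1"
  shows "norm (klein_act A x) < 1" "L (klein_act A x) = L x / sc A x"
proof -
  define s where "s = sc A x"
  define y where "y = klein_act A x"
  have s: "s > 0" unfolding s_def using sc_pos[OF A x] .
  have eq: "A (x, 1) = s *\<^sub>R (y, 1)" unfolding s_def y_def using A_Pair[OF A x] .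
  have "norm x ^ 2 - 1 = mink_inner (A (x,1)) (A (x,1))" using O_plus_D(2)[OF A] mi_self_Pair by metis
  also have "\<dots> = s^2 * (norm y ^ 2 - 1)" unfolding eq mi_scale_left mi_scale_right mi_self_Pair by (simp add: power2_eq_square)
  finally have e: "norm y ^ 2 = 1 - (1 - norm x ^ 2) / s^2" using s by (simp add: field_simps)
  have "(1 - norm x ^ 2) > 0" using x by (simp add: power_less_one_iff abs_square_less_1)
  then have "norm y ^ 2 < 1" unfolding e using s by simp
  then show "norm (klein_act A x) < 1" unfolding y_def by (simp add: power_less_one_iff abs_square_less_1)
  have "L y = sqrt ((1 - norm x ^ 2) / s^2)" unfolding L_def e by simp
  also have "\<dots> = L x / s" unfolding L_def using s by (simp add: real_sqrt_divide)
  finally show "L (klein_act A x) = L x / sc A x" unfolding y_def s_def .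
qed

lemma klein_act_comp:
  fixes A B :: "'n::finite mink \<Rightarrow> 'n mink"
  assumes A: "A \<in> O_plus" and B: "B \<in> O_plus" and x: "norm x < 1"
  shows "klein_act (A \<circ> B) x = klein_act A (klein_act B x)"
    "sc (A \<circ> B) x = sc B x * sc A (klein_act B x)"
proof -
  have y: "norm (klein_act B x) < 1" using klein_act_props(1)[OF B x] .
  have "(A \<circ> B) (x, 1) = A (sc B x *\<^sub>R (klein_act B x, 1))"
    by (simp only: o_def A_Pair[OF B x])
  also have "\<dots> = sc B x *\<^sub>R A (klein_act B x, 1)"
    by (rule linear_scale[OF O_plus_D(1)[OF A]])
  also have "\<dots> = (sc B x * sc A (klein_act B x)) *\<^sub>R (klein_act A (klein_act B x), 1)"
    using A_Pair[OF A y] by simp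
  finally have e: "(A \<circ> B) (x, 1) = (sc B x * sc A (klein_act B x)) *\<^sub>R (klein_act A (klein_act B x), 1)" .
  have pos: "sc B x * sc A (klein_act B x) > 0" using sc_pos[OF B x] sc_pos[OF A y] by simp
  show "klein_act (A \<circ> B) x = klein_act A (klein_act B x)"
    using sc_pos[OF B x] sc_pos[OF A y] unfolding klein_act_def[of "A \<circ> B" x] e by simp
  show "sc (A \<circ> B) x = sc B x * sc A (klein_act B x)"
    unfolding sc_def e by simp
qed

lemma klein_act_id: "klein_act id x = x" by (simp add: klein_act_def)

lemma klein_act_inv_cancel:
  fixes A :: "'n::finite mink \<Rightarrow> 'n mink"
  assumes A: "A \<in> O_plus" and Ai: "inv A \<in> O_plus" and x: "norm x < 1"
  shows "klein_act (inv A) (klein_act A x) = x" "klein_act A (klein_act (inv A) x) = x"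
  using klein_act_comp(1)[OF Ai A x] klein_act_comp(1)[OF A Ai x] O_plus_inv[OF A] by (simp_all add: klein_act_id)

lemma inv_Pair:
  fixes B :: "'n::finite mink \<Rightarrow> 'n mink"
  assumes B: "B \<in> O_plus" and Bi: "inv B \<in> O_plus" and x: "norm x < 1"
  shows "(klein_act (inv B) x, 1) = (1 / sc (inv B) x) *\<^sub>R inv B (x, 1)"
  using A_Pair[OF Bi x] sc_pos[OF Bi x] by simp

lemma fun_act_eq:
  fixes B :: "'n::finite mink \<Rightarrow> 'n mink"
  assumes B: "B \<in> O_plus" and Bi: "inv B \<in> O_plus" and x: "norm x < 1"
  shows "fun_act B v h x = sc (inv B) x * h (klein_act (inv B) x) + mink_inner (x, 1) v"
proof -
  have "L x / L (klein_act (inv B) x) = sc (inv B) x"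
    using klein_act_props(2)[OF Bi x] L_pos[OF x] sc_pos[OF Bi x] by simp
  then show ?thesis by (simp add: fun_act_def mi_Pair)
qed

definition e0 :: "'n::finite mink" where "e0 = (0, 1)"
definition wfun :: "('n::finite mink \<Rightarrow> 'n mink) \<Rightarrow> real^'n \<Rightarrow> real" where
  "wfun A x = - mink_inner (x, 1) (A e0) / L x"
definition psi :: "real \<Rightarrow> ('n::finite mink \<Rightarrow> 'n mink) \<Rightarrow> real^'n \<Rightarrow> real" where
  "psi R A x = bump (R - wfun A x)"
definition Nz where "Nz G R x = {A\<in>G. psi R A x \<noteq> 0}"
definition Spsi where "Spsi G R x = (\<Sum>A\<in>Nz G R x. psi R A x)"
definition h0 where "h0 G R \<sigma> x = (\<Sum>A\<in>Nz G R x. psi R A x * mink_inner (x, 1) (\<sigma> A)) / Spsi G R x"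

lemma O_plus_e0: fixes A :: "'n::finite mink \<Rightarrow> 'n mink" shows "A \<in> O_plus \<Longrightarrow> snd (A e0) > 0" "A \<in> O_plus \<Longrightarrow> mink_inner (A e0) (A e0) = -1"
proof -
  assume A: "A \<in> O_plus"
  have m: "mink_inner e0 e0 = (-1::real)" "snd (e0::'n mink) > 0" by (auto simp: e0_def mink_inner_def)
  show "snd (A e0) > 0" using O_plus_D(3)[OF A m] .
next
  assume A: "A \<in> O_plus"
  have m: "mink_inner e0 e0 = (-1::real)" by (auto simp: e0_def mink_inner_def)
  show "mink_inner (A e0) (A e0) = -1" using O_plus_D(2)[OF A, of e0 e0] m by simp
qed

locale latt =
  fixes \<Gamma> :: "('n::finite mink \<Rightarrow> 'n mink) set"
  assumes sub: "is_subgroup_O \<Gamma>" and pd: "acts_properly_discontinuously \<Gamma>"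
begin

lemma G_O: "A \<in> \<Gamma> \<Longrightarrow> A \<in> O_plus" and G_inv: "A \<in> \<Gamma> \<Longrightarrow> inv A \<in> \<Gamma>"
  and G_comp: "A \<in> \<Gamma> \<Longrightarrow> B \<in> \<Gamma> \<Longrightarrow> A \<circ> B \<in> \<Gamma>" and G_id: "id \<in> \<Gamma>"
  using sub unfolding is_subgroup_O_def by auto

lemma G_invO: "A \<in> \<Gamma> \<Longrightarrow> inv A \<in> O_plus" using G_O G_inv by blast

lemma wfun_rel:
  assumes B: "B \<in> \<Gamma>" and x: "norm x < 1"
  shows "wfun A (klein_act (inv B) x) = wfun (B \<circ> A) x"
proof -
  define s where "s = sc (inv B) x"
  have s: "s > 0" unfolding s_def using sc_pos[OF G_invO[OF B] x] .
  have yp: "(klein_act (inv B) x, 1) = (1 / s) *\<^sub>R inv B (x, 1)"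
    unfolding s_def using inv_Pair[OF G_O[OF B] G_invO[OF B] x] .
  have Ly: "L (klein_act (inv B) x) = L x / s"
    unfolding s_def using klein_act_props(2)[OF G_invO[OF B] x] .
  have "mink_inner (klein_act (inv B) x, 1) (A e0) = (1 / s) * mink_inner (inv B (x, 1)) (A e0)"
    unfolding yp mi_scale_left ..
  also have "mink_inner (inv B (x, 1)) (A e0) = mink_inner (B (inv B (x, 1))) (B (A e0))"
    using O_plus_D(2)[OF G_O[OF B]] by simp
  also have "\<dots> = mink_inner (x, 1) ((B \<circ> A) e0)" using O_plus_inv(2)[OF G_O[OF B]] by simp
  finally show ?thesis unfolding wfun_def Ly using s L_pos[OF x] by (simp add: field_simps)
qed

lemma ell_rel:
  assumes B: "B \<in> \<Gamma>" and x: "norm x < 1"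
  shows "mink_inner (klein_act (inv B) x, 1) v = (1 / sc (inv B) x) * mink_inner (x, 1) (B v)"
proof -
  have yp: "(klein_act (inv B) x, 1) = (1 / sc (inv B) x) *\<^sub>R inv B (x, 1)"
    using inv_Pair[OF G_O[OF B] G_invO[OF B] x] .
  have "mink_inner (inv B (x, 1)) v = mink_inner (B (inv B (x, 1))) (B v)"
    using O_plus_D(2)[OF G_O[OF B]] by simp
  then show ?thesis unfolding yp mi_scale_left using O_plus_inv(2)[OF G_O[OF B]] by simp
qed

lemma psi_rel:
  assumes B: "B \<in> \<Gamma>" and x: "norm x < 1"
  shows "psi R A (klein_act (inv B) x) = psi R (B \<circ> A) x"
  unfolding psi_def wfun_rel[OF B x] ..

lemma finite_support:
  assumes \<rho>: "\<rho> < 1" and R: "R > 0"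
  shows "finite {A\<in>\<Gamma>. \<exists>x\<in>cball 0 \<rho>. psi R A x \<noteq> 0}"
proof -
  define Q where "Q = R / (1 - \<rho>)"
  define \<rho>' where "\<rho>' = sqrt (1 - 1 / Q^2)"
  have Qpos: "Q > 0" unfolding Q_def using R \<rho> by simp
  have K: "compact (cball (0::real^'n) \<rho>')" "cball (0::real^'n) \<rho>' \<subseteq> ball 0 1"
  proof -
    show "compact (cball (0::real^'n) \<rho>')" by simp
    have "\<rho>' < 1" unfolding \<rho>'_def using Qpos by simp
    then show "cball (0::real^'n) \<rho>' \<subseteq> ball 0 1" by auto
  qed
  have sub: "{A\<in>\<Gamma>. \<exists>x\<in>cball 0 \<rho>. psi R A x \<noteq> 0} \<subseteq> {A\<in>\<Gamma>. klein_act A ` cball 0 \<rho>' \<inter> cball 0 \<rho>' \<noteq> {}}"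
  proof safe
    fix A x assume A: "A \<in> \<Gamma>" and x: "x \<in> cball (0::real^'n) \<rho>" and nz: "psi R A x \<noteq> 0"
    have xn: "norm x \<le> \<rho>" using x by simp
    then have x1: "norm x < 1" using \<rho> by simp
    define q where "q = A e0"
    have q4: "snd q > 0" "fst q \<bullet> fst q = snd q ^ 2 - 1"
      using O_plus_e0[OF G_O[OF A]] unfolding q_def by (auto simp: mink_inner_def power2_eq_square)
    have nq: "norm (fst q) ^ 2 = snd q ^ 2 - 1" using q4(2) by (simp add: power2_norm_eq_inner)
    have nq_le: "norm (fst q) \<le> snd q"
    proof (rule power2_le_imp_le)
      show "norm (fst q) ^ 2 \<le> snd q ^ 2" using nq by linarith
      show "0 \<le> snd q" using q4(1) by linarith
    qed
    have "wfun A x < R"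
    proof (rule ccontr)
      assume "\<not> wfun A x < R"
      then have "R - wfun A x \<le> 0" by linarith
      then have "bump (R - wfun A x) = 0" by (rule bump_zero)
      then show False using nz unfolding psi_def by (simp only: not_True_eq_False)
    qed
    moreover have "wfun A x = (snd q - x \<bullet> fst q) / L x"
      unfolding wfun_def q_def mink_inner_def by (simp add: minus_divide_left)
    moreover have "x \<bullet> fst q \<le> \<rho> * snd q"
    proof -
      have "x \<bullet> fst q \<le> norm x * norm (fst q)" by (rule norm_cauchy_schwarz)
      also have "\<dots> \<le> \<rho> * snd q" proof (rule mult_mono)
        show "0 \<le> \<rho>" using xn norm_ge_zero[of x] by linarith
      qed (use xn nq_le in auto)
      finally show ?thesis .
    qed
    moreover have "L x > 0" "L x \<le> 1" using L_pos[OF x1] L_le1 by auto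
    ultimately have "(1 - \<rho>) * snd q < R"
    proof -
      assume a: "wfun A x < R" "wfun A x = (snd q - x \<bullet> fst q) / L x" "x \<bullet> fst q \<le> \<rho> * snd q" "L x > 0" "L x \<le> 1"
      have "\<rho> * snd q \<le> 1 * snd q" using \<rho> q4(1) by (intro mult_right_mono) auto
      then have nn: "snd q - x \<bullet> fst q \<ge> 0" using a(3) by linarith
      have "snd q - x \<bullet> fst q \<le> (snd q - x \<bullet> fst q) / L x"
        using nn a(4,5) mult_left_le_one_le[OF nn, of "L x"] by (simp add: le_divide_eq mult.commute)
      then show ?thesis using a by (simp add: algebra_simps)
    qed
    then have qQ: "snd q < Q" unfolding Q_def using \<rho> by (simp add: field_simps)
    have ka: "klein_act A 0 = (1 / snd q) *\<^sub>R fst q" unfolding klein_act_def q_def e0_def by simp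
    have "norm (klein_act A 0) ^ 2 = 1 - 1 / (snd q)^2"
      unfolding ka using q4(1) nq by (simp add: power_divide field_simps)
    also have "\<dots> \<le> 1 - 1 / Q^2"
      using qQ q4(1) by (simp add: frac_le power_strict_mono less_imp_le)
    finally have n2: "norm (klein_act A 0) ^ 2 \<le> 1 - 1 / Q^2" .
    have "norm (klein_act A 0) \<le> \<rho>'" unfolding \<rho>'_def by (rule real_le_rsqrt[OF n2])
    moreover have "0 \<le> \<rho>'" unfolding \<rho>'_def using order_trans[OF zero_le_power2 n2] by (rule real_sqrt_ge_zero)
    ultimately have "klein_act A 0 \<in> klein_act A ` cball 0 \<rho>' \<inter> cball 0 \<rho>'"
      by (intro IntI imageI) auto
    moreover assume "klein_act A ` cball 0 \<rho>' \<inter> cball 0 \<rho>' = {}"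
    ultimately show False by blast
  qed
  have "finite {A\<in>\<Gamma>. klein_act A ` cball 0 \<rho>' \<inter> cball 0 \<rho>' \<noteq> {}}"
    using pd K unfolding acts_properly_discontinuously_def by blast
  then show ?thesis using finite_subset[OF sub] by blast
qed

end

context latt begin

definition Fs :: "real \<Rightarrow> real \<Rightarrow> ('n mink \<Rightarrow> 'n mink) set" where
  "Fs R \<rho> = {A\<in>\<Gamma>. \<exists>x\<in>cball 0 \<rho>. psi R A x \<noteq> 0}"

lemma Fs_finite: "\<rho> < 1 \<Longrightarrow> R > 0 \<Longrightarrow> finite (Fs R \<rho>)"
  unfolding Fs_def using finite_support by blast

lemma Nz_sub: "norm x \<le> \<rho> \<Longrightarrow> Nz \<Gamma> R x \<subseteq> Fs R \<rho>"
  unfolding Nz_def Fs_def by auto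

lemma psi_nonneg: "psi R A x \<ge> 0" unfolding psi_def by (rule bump_nonneg)

lemma sum_Nz_Fs:
  assumes "\<rho> < 1" "R > 0" "norm x \<le> \<rho>"
  shows "(\<Sum>A\<in>Nz \<Gamma> R x. psi R A x * g A) = (\<Sum>A\<in>Fs R \<rho>. psi R A x * g A)"
proof (rule sum.mono_neutral_left[OF Fs_finite[OF assms(1,2)] Nz_sub[OF assms(3)]])
  show "\<forall>i\<in>Fs R \<rho> - Nz \<Gamma> R x. psi R i x * g i = 0" unfolding Nz_def Fs_def by auto
qed

lemma Nz_finite: "norm x < 1 \<Longrightarrow> R > 0 \<Longrightarrow> finite (Nz \<Gamma> R x)"
  using finite_subset[OF Nz_sub[of x "norm x"] Fs_finite[of "norm x" R]] by simp

lemma reidx: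
  assumes B: "B \<in> \<Gamma>" and x: "norm x < 1"
  shows "(\<Sum>A\<in>Nz \<Gamma> R (klein_act (inv B) x). g (B \<circ> A)) = (\<Sum>C\<in>Nz \<Gamma> R x. g C)"
proof (rule sum.reindex_bij_witness[where i="\<lambda>C. inv B \<circ> C" and j="\<lambda>A. B \<circ> A"])
  have BO: "B \<in> O_plus" using G_O[OF B] .
  have c1: "inv B \<circ> B = id" "B \<circ> inv B = id" using O_plus_inv(3,4)[OF BO] by auto
  fix A assume A: "A \<in> Nz \<Gamma> R (klein_act (inv B) x)"
  show "inv B \<circ> (B \<circ> A) = A" using c1 by (simp add: o_assoc)
  show "B \<circ> A \<in> Nz \<Gamma> R x" using A G_comp[OF B] psi_rel[OF B x] unfolding Nz_def by auto
next
  have BO: "B \<in> O_plus" using G_O[OF B] .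
  have c1: "inv B \<circ> B = id" "B \<circ> inv B = id" using O_plus_inv(3,4)[OF BO] by auto
  fix C assume C: "C \<in> Nz \<Gamma> R x"
  show "B \<circ> (inv B \<circ> C) = C" using c1 by (simp add: o_assoc)
  have "psi R (inv B \<circ> C) (klein_act (inv B) x) = psi R C x"
    using psi_rel[OF B x] c1 by (simp add: o_assoc)
  then show "inv B \<circ> C \<in> Nz \<Gamma> R (klein_act (inv B) x)"
    using C G_comp[OF G_inv[OF B]] unfolding Nz_def by auto
qed simp

lemma cocycle_id: "cocycle \<Gamma> \<sigma> \<Longrightarrow> \<sigma> id = 0"
  using G_id unfolding cocycle_def by (metis comp_id id_apply add_cancel_right_right)

lemma h0_equivariant:
  assumes \<sigma>: "cocycle \<Gamma> \<sigma>" and B: "B \<in> \<Gamma>" and x: "norm x < 1" and Spos: "Spsi \<Gamma> R x > 0"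
  shows "fun_act B (\<sigma> B) (h0 \<Gamma> R \<sigma>) x = h0 \<Gamma> R \<sigma> x"
proof -
  define y where "y = klein_act (inv B) x"
  define s where "s = sc (inv B) x"
  have s: "s > 0" unfolding s_def using sc_pos[OF G_invO[OF B] x] .
  have Sy: "Spsi \<Gamma> R y = Spsi \<Gamma> R x"
    unfolding Spsi_def y_def psi_rel[OF B x] using reidx[OF B x, of "\<lambda>C. psi R C x"] by simp
  have "(\<Sum>A\<in>Nz \<Gamma> R y. psi R A y * mink_inner (y, 1) (\<sigma> A))
      = (\<Sum>A\<in>Nz \<Gamma> R y. psi R (B \<circ> A) x * ((1 / s) * (mink_inner (x, 1) (\<sigma> (B \<circ> A)) - mink_inner (x, 1) (\<sigma> B))))"
  proof (rule sum.cong[OF refl])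
    fix A assume A: "A \<in> Nz \<Gamma> R y"
    then have AG: "A \<in> \<Gamma>" unfolding Nz_def by auto
    have "\<sigma> (B \<circ> A) = \<sigma> B + B (\<sigma> A)" using \<sigma> B AG unfolding cocycle_def by blast
    then have "mink_inner (x, 1) (B (\<sigma> A)) = mink_inner (x, 1) (\<sigma> (B \<circ> A)) - mink_inner (x, 1) (\<sigma> B)"
      by (simp add: mi_add_right)
    then show "psi R A y * mink_inner (y, 1) (\<sigma> A) = psi R (B \<circ> A) x * ((1 / s) * (mink_inner (x, 1) (\<sigma> (B \<circ> A)) - mink_inner (x, 1) (\<sigma> B)))"
      unfolding y_def s_def psi_rel[OF B x] ell_rel[OF B x] by simp
  qed
  also have "\<dots> = (\<Sum>C\<in>Nz \<Gamma> R x. psi R C x * ((1 / s) * (mink_inner (x, 1) (\<sigma> C) - mink_inner (x, 1) (\<sigma> B))))"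
    unfolding y_def by (rule reidx[OF B x, of "\<lambda>C. psi R C x * ((1 / s) * (mink_inner (x, 1) (\<sigma> C) - mink_inner (x, 1) (\<sigma> B)))"])
  also have "\<dots> = (1 / s) * ((\<Sum>C\<in>Nz \<Gamma> R x. psi R C x * mink_inner (x, 1) (\<sigma> C)) - mink_inner (x, 1) (\<sigma> B) * Spsi \<Gamma> R x)"
    unfolding Spsi_def by (simp add: sum_distrib_left sum_subtractf algebra_simps)
  finally have num: "(\<Sum>A\<in>Nz \<Gamma> R y. psi R A y * mink_inner (y, 1) (\<sigma> A)) = \<dots>" .
  have "fun_act B (\<sigma> B) (h0 \<Gamma> R \<sigma>) x = s * h0 \<Gamma> R \<sigma> y + mink_inner (x, 1) (\<sigma> B)"
    unfolding s_def y_def using fun_act_eq[OF G_O[OF B] G_invO[OF B] x] .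
  also have "s * h0 \<Gamma> R \<sigma> y = h0 \<Gamma> R \<sigma> x - mink_inner (x, 1) (\<sigma> B)"
    unfolding h0_def num Sy using s Spos by (simp add: field_simps)
  finally show ?thesis by simp
qed

end

locale latt2 = latt +
  fixes r :: real
  assumes r: "0 \<le> r" "r < 1"
    and cover: "\<And>x. norm x < 1 \<Longrightarrow> \<exists>A\<in>\<Gamma>. norm (klein_act (inv A) x) \<le> r"
begin

definition RR :: real where "RR = 1 / sqrt (1 - r^2) + 1"

lemma RR_pos: "RR > 0"
proof -
  have "r^2 < 1" using r by (simp add: abs_square_less_1)
  then have "sqrt (1 - r^2) > 0" by simp
  then have "1 / sqrt (1 - r^2) > 0" by simp
  then show ?thesis unfolding RR_def by linarith
qed

lemma Spsi_pos:
  assumes x: "norm x < 1" shows "Spsi \<Gamma> RR x > 0"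
proof -
  obtain A where A: "A \<in> \<Gamma>" "norm (klein_act (inv A) x) \<le> r" using cover[OF x] by blast
  define k where "k = klein_act (inv A) x"
  have k1: "norm k < 1" using A(2) r unfolding k_def by simp
  have "wfun id k = wfun A x" unfolding k_def using wfun_rel[OF A(1) x, of id] by simp
  moreover have "wfun id k = 1 / L k" unfolding wfun_def e0_def by (simp add: mink_inner_def)
  moreover have "1 / L k \<le> 1 / sqrt (1 - r^2)"
  proof -
    have "norm k ^ 2 \<le> r ^ 2" using A(2) unfolding k_def by (simp add: power_mono)
    then have "sqrt (1 - r^2) \<le> L k" unfolding L_def by simp
    moreover have "sqrt (1 - r^2) > 0" using r by (simp add: abs_square_less_1)
    ultimately show ?thesis by (simp add: frac_le)
  qed
  ultimately have "wfun A x < RR" unfolding RR_def by simp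
  then have pA: "psi RR A x > 0" unfolding psi_def by (intro bump_pos) simp
  then have AN: "A \<in> Nz \<Gamma> RR x" unfolding Nz_def using A(1) by simp
  have "psi RR A x \<le> Spsi \<Gamma> RR x"
    unfolding Spsi_def by (rule member_le_sum[OF AN]) (auto simp: psi_nonneg intro: Nz_finite[OF x RR_pos])
  then show ?thesis using pA by simp
qed

end

lemma pd_sum:
  fixes f :: "'a \<Rightarrow> real^'n::finite \<Rightarrow> real"
  assumes "finite I" "\<And>i. i \<in> I \<Longrightarrow> f i differentiable at y"
  shows "partial_deriv j (\<lambda>x. \<Sum>i\<in>I. f i x) y = (\<Sum>i\<in>I. partial_deriv j (f i) y) \<and>
         (\<lambda>x. \<Sum>i\<in>I. f i x) differentiable at y"
  using assms
proof (induction I rule: finite_induct)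
  case empty then show ?case by (simp add: pd_const)
next
  case (insert a I)
  have da: "f a differentiable at y" using insert.prems by simp
  have ih: "partial_deriv j (\<lambda>x. \<Sum>i\<in>I. f i x) y = (\<Sum>i\<in>I. partial_deriv j (f i) y)"
    "(\<lambda>x. \<Sum>i\<in>I. f i x) differentiable at y" using insert by auto
  show ?case using pd_add[OF da ih(2), of j] ih da insert.hyps by simp
qed

lemma pd_cmult:
  fixes f :: "real^'n::finite \<Rightarrow> real"
  assumes "f differentiable at y"
  shows "partial_deriv j (\<lambda>x. c * f x) y = c * partial_deriv j f y" "(\<lambda>x. c * f x) differentiable at y"
  using pd_mult[OF differentiable_const assms, of j] assms by (auto simp: pd_const)

lemma iter_partial_lincomb:
  fixes f :: "'a \<Rightarrow> real^'n::finite \<Rightarrow> real"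
  assumes S: "open S" and I: "finite I" and f: "\<And>i. i \<in> I \<Longrightarrow> smooth_on S (f i)"
  shows "y \<in> S \<Longrightarrow> iter_partial is (\<lambda>x. \<Sum>i\<in>I. c i * f i x) y = (\<Sum>i\<in>I. c i * iter_partial is (f i) y)"
proof (induction "is" arbitrary: y)
  case Nil then show ?case by simp
next
  case (Cons j "is")
  define G where "G = (\<lambda>z. \<Sum>i\<in>I. c i * iter_partial is (f i) z)"
  have dG2: "iter_partial is (f i) differentiable at y" if "i \<in> I" for i
  proof -
    have "iter_partial is (f i) differentiable_on S" using f[OF that] unfolding smooth_on_def by blast
    then show ?thesis using differentiable_on_eq_differentiable_at[OF S] Cons.prems by blast
  qed
  have dG: "\<And>i. i \<in> I \<Longrightarrow> (\<lambda>z. c i * iter_partial is (f i) z) differentiable at y"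
    "\<And>i. i \<in> I \<Longrightarrow> iter_partial is (f i) differentiable at y"
    using pd_cmult(2)[OF dG2] dG2 by auto
  have "partial_deriv j (iter_partial is (\<lambda>x. \<Sum>i\<in>I. c i * f i x)) y = partial_deriv j G y"
  proof (rule partial_deriv_local(1)[OF S Cons.prems])
    show "\<And>z. z \<in> S \<Longrightarrow> iter_partial is (\<lambda>x. \<Sum>i\<in>I. c i * f i x) z = G z" unfolding G_def using Cons.IH by blast
    show "G differentiable at y" unfolding G_def using pd_sum[of I "\<lambda>i z. c i * iter_partial is (f i) z" y j] I dG(1) by blast
  qed
  also have "\<dots> = (\<Sum>i\<in>I. partial_deriv j (\<lambda>z. c i * iter_partial is (f i) z) y)"
    unfolding G_def using pd_sum[of I "\<lambda>i z. c i * iter_partial is (f i) z" y j] I dG(1) by blast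
  also have "\<dots> = (\<Sum>i\<in>I. c i * iter_partial (j # is) (f i) y)"
    using pd_cmult(1)[OF dG(2)] by simp
  finally show ?case by simp
qed

lemma iter_partial_lin2:
  fixes f g :: "real^'n::finite \<Rightarrow> real"
  assumes S: "open S" and f: "smooth_on S f" and g: "smooth_on S g" and y: "y \<in> S"
  shows "iter_partial is (\<lambda>x. a * f x + b * g x) y = a * iter_partial is f y + b * iter_partial is g y"
proof -
  have "iter_partial is (\<lambda>x. \<Sum>i\<in>(UNIV::bool set). (if i then a else b) * (if i then f else g) x) y =
      (\<Sum>i\<in>(UNIV::bool set). (if i then a else b) * iter_partial is (if i then f else g) y)"
    by (rule iter_partial_lincomb[OF S]) (use f g y in auto)
  then show ?thesis by (simp add: UNIV_bool add.commute)
qed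

lemma iter_partial_diff_scale:
  fixes f g :: "real^'n::finite \<Rightarrow> real"
  assumes S: "open S" and f: "smooth_on S f" and g: "smooth_on S g" and y: "y \<in> S"
  shows "iter_partial is (\<lambda>x. f x - c * g x) y = iter_partial is f y - c * iter_partial is g y"
  using iter_partial_lin2[OF assms, of "is" 1 "-c"] by simp

lemma iter_partial_neg:
  fixes f :: "real^'n::finite \<Rightarrow> real"
  assumes S: "open S" and f: "smooth_on S f" and y: "y \<in> S"
  shows "iter_partial is (\<lambda>x. - f x) y = - iter_partial is f y"
  using iter_partial_lin2[OF S f f y, of "is" "-1" 0] by simp

lemma smooth_norm2:
  assumes S: "open S" shows "smooth_on S (\<lambda>x::real^'n::finite. norm x ^ 2)"
proof (rule smooth_on_cong[OF S])
  show "smooth_on S (\<lambda>x::real^'n. \<Sum>i\<in>UNIV. x$i * x$i)"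
    by (intro smooth_sum[OF S] smooth_mult[OF S] smooth_coord[OF S]) auto
  show "norm x ^ 2 = (\<Sum>i\<in>UNIV. x$i * x$i)" for x :: "real^'n"
    by (simp add: power2_norm_eq_inner inner_vec_def)
qed

lemma smooth_mi:
  assumes S: "open S" shows "smooth_on S (\<lambda>x::real^'n::finite. mink_inner (x, 1) v)"
proof (rule smooth_on_cong[OF S])
  show "smooth_on S (\<lambda>x::real^'n. (\<Sum>i\<in>UNIV. fst v $ i * x$i) - snd v)"
    by (intro smooth_diff[OF S] smooth_sum[OF S] smooth_scale[OF S] smooth_coord[OF S] smooth_const[OF S]) auto
  show "mink_inner (x, 1) v = (\<Sum>i\<in>UNIV. fst v $ i * x$i) - snd v" for x :: "real^'n"
    by (simp add: mink_inner_def inner_vec_def mult.commute)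
qed

lemma smooth_L: "smooth_on (ball 0 1) (L :: real^'n::finite \<Rightarrow> real)"
proof (rule smooth_on_cong[OF open_ball])
  have pos: "1 - norm x ^ 2 > 0" if "x \<in> ball (0::real^'n) 1" for x
    using that by (simp add: abs_square_less_1)
  show "smooth_on (ball 0 1) (\<lambda>x::real^'n. (1 - norm x ^ 2) powr (1/2))"
    by (rule smooth_powr[OF open_ball smooth_diff[OF open_ball smooth_const[OF open_ball] smooth_norm2[OF open_ball]] pos])
  show "L x = (1 - norm x ^ 2) powr (1/2)" if "x \<in> ball 0 1" for x :: "real^'n"
    using pos[OF that] by (simp add: L_def powr_half_sqrt)
qed

lemma smooth_wfun: "smooth_on (ball 0 1) (wfun A :: real^'n::finite \<Rightarrow> real)"
proof (rule smooth_on_cong[OF open_ball])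
  show "smooth_on (ball 0 1) (\<lambda>x::real^'n. - (mink_inner (x, 1) (A e0) * (1 / L x)))"
    by (intro smooth_neg[OF open_ball] smooth_mult[OF open_ball] smooth_mi[OF open_ball]
        smooth_inverse[OF open_ball smooth_L]) (auto intro: L_pos)
  show "wfun A x = - (mink_inner (x, 1) (A e0) * (1 / L x))" if "x \<in> ball 0 1" for x :: "real^'n"
    by (simp add: wfun_def)
qed

lemma smooth_psi: "smooth_on (ball 0 1) (psi R A :: real^'n::finite \<Rightarrow> real)"
  unfolding psi_def[abs_def]
  by (rule smooth_comp[OF open_ball smooth_diff[OF open_ball smooth_const[OF open_ball] smooth_wfun] _ smooth1_bump]) simp

fun bas :: "('n::finite mink \<Rightarrow> 'n mink) set \<Rightarrow> real \<Rightarrow> ((('n mink \<Rightarrow> 'n mink) \<times> 'n) + ('n mink \<Rightarrow> 'n mink)) \<Rightarrow> real^'n \<Rightarrow> real" where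
  "bas G R (Inl (A, k)) x = x$k * (psi R A x * (1 / Spsi G R x))"
| "bas G R (Inr A) x = psi R A x * (1 / Spsi G R x)"

fun coef :: "(('n::finite mink \<Rightarrow> 'n mink) \<Rightarrow> 'n mink) \<Rightarrow> ((('n mink \<Rightarrow> 'n mink) \<times> 'n) + ('n mink \<Rightarrow> 'n mink)) \<Rightarrow> real" where
  "coef \<sigma> (Inl (A, k)) = fst (\<sigma> A) $ k"
| "coef \<sigma> (Inr A) = - snd (\<sigma> A)"


definition IdxG :: "('n::finite mink \<Rightarrow> 'n mink) set \<Rightarrow> ((('n mink \<Rightarrow> 'n mink) \<times> 'n) + ('n mink \<Rightarrow> 'n mink)) set" where
  "IdxG F = (F \<times> UNIV) <+> F"

lemma coef_Inl: "coef \<sigma> (Inl p) = fst (\<sigma> (fst p)) $ snd p" by (cases p) simp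
lemma bas_Inl: "bas G R (Inl p) x = x $ snd p * (psi R (fst p) x * (1 / Spsi G R x))" by (cases p) simp

context latt2 begin

lemma ball_rho: "norm x0 < 1 \<Longrightarrow> x0 \<in> ball 0 ((norm x0 + 1) / 2)" "norm x0 < 1 \<Longrightarrow> (norm x0 + 1) / 2 < (1::real)"
  by auto

lemma ball_sub: "\<rho> < 1 \<Longrightarrow> ball (0::real^'n) \<rho> \<subseteq> ball 0 1" by (auto simp: subset_ball)

lemma Spsi_rep: "\<rho> < 1 \<Longrightarrow> norm x \<le> \<rho> \<Longrightarrow> Spsi \<Gamma> RR x = (\<Sum>A\<in>Fs RR \<rho>. psi RR A x)"
  unfolding Spsi_def using sum_Nz_Fs[OF _ RR_pos, of \<rho> x "\<lambda>_. 1"] by simp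

lemma local_smooth:
  assumes "\<And>\<rho> x. \<rho> < 1 \<Longrightarrow> x \<in> ball 0 \<rho> \<Longrightarrow> f x = g \<rho> x"
    and "\<And>\<rho>. \<rho> < 1 \<Longrightarrow> smooth_on (ball 0 \<rho>) (g \<rho>)"
  shows "smooth_on (ball (0::real^'n) 1) f"
proof (rule smooth_on_local[OF open_ball])
  fix x0 :: "real^'n" assume "x0 \<in> ball 0 1"
  then have x0: "norm x0 < 1" by simp
  show "\<exists>T g. open T \<and> x0 \<in> T \<and> smooth_on T g \<and> (\<forall>y\<in>T. f y = g y)"
    using ball_rho(1,2)[OF x0] assms by blast
qed

lemma Spsi_smooth: "smooth_on (ball 0 1) (Spsi \<Gamma> RR)"
proof (rule local_smooth[where g="\<lambda>\<rho> x. \<Sum>A\<in>Fs RR \<rho>. psi RR A x"])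
  show "\<rho> < 1 \<Longrightarrow> x \<in> ball 0 \<rho> \<Longrightarrow> Spsi \<Gamma> RR x = (\<Sum>A\<in>Fs RR \<rho>. psi RR A x)" for \<rho> x
    by (rule Spsi_rep) auto
  show "smooth_on (ball 0 \<rho>) (\<lambda>x. \<Sum>A\<in>Fs RR \<rho>. psi RR A x)" if "\<rho> < 1" for \<rho>
    by (rule smooth_sum[OF open_ball Fs_finite[OF that RR_pos]]) (rule smooth_on_subset[OF smooth_psi ball_sub[OF that]])
qed

lemma invS_smooth: "smooth_on (ball 0 1) (\<lambda>x. 1 / Spsi \<Gamma> RR x)"
  by (rule smooth_inverse[OF open_ball Spsi_smooth]) (simp add: Spsi_pos)


lemma IdxG_finite: "\<rho> < 1 \<Longrightarrow> finite (IdxG (Fs RR \<rho>))"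
  unfolding IdxG_def using Fs_finite[OF _ RR_pos] by simp

lemma bas_smooth: "smooth_on (ball 0 1) (bas \<Gamma> RR p)"
proof (cases p)
  case (Inl a) then obtain A k where p: "p = Inl (A, k)" by (cases a) auto
  show ?thesis unfolding p bas.simps[abs_def]
    by (intro smooth_mult[OF open_ball] smooth_coord[OF open_ball] smooth_psi invS_smooth)
next
  case (Inr A)
  show ?thesis unfolding Inr bas.simps[abs_def]
    by (intro smooth_mult[OF open_ball] smooth_psi invS_smooth)
qed

lemma h0_rep:
  assumes \<rho>: "\<rho> < 1" and x: "norm x \<le> \<rho>"
  shows "h0 \<Gamma> RR \<sigma> x = (\<Sum>p\<in>IdxG (Fs RR \<rho>). coef \<sigma> p * bas \<Gamma> RR p x)"
proof -
  have fin: "finite (Fs RR \<rho>)" using Fs_finite[OF \<rho> RR_pos] .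
  have "h0 \<Gamma> RR \<sigma> x = (\<Sum>A\<in>Fs RR \<rho>. psi RR A x * mink_inner (x, 1) (\<sigma> A)) * (1 / Spsi \<Gamma> RR x)"
    unfolding h0_def sum_Nz_Fs[OF \<rho> RR_pos x] by simp
  also have "\<dots> = (\<Sum>A\<in>Fs RR \<rho>. (\<Sum>k\<in>UNIV. fst (\<sigma> A) $ k * (x$k * (psi RR A x * (1 / Spsi \<Gamma> RR x))))
        + (- snd (\<sigma> A)) * (psi RR A x * (1 / Spsi \<Gamma> RR x)))"
    unfolding sum_distrib_right
  proof (rule sum.cong[OF refl])
    fix A
    define b where "b = psi RR A x * (1 / Spsi \<Gamma> RR x)"
    have m: "mink_inner (x, 1) (\<sigma> A) = (\<Sum>k\<in>UNIV. fst (\<sigma> A) $ k * x$k) - snd (\<sigma> A)"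
      by (simp add: mink_inner_def inner_vec_def mult.commute)
    have "(\<Sum>k\<in>UNIV. fst (\<sigma> A) $ k * (x$k * b)) = (\<Sum>k\<in>UNIV. fst (\<sigma> A) $ k * x$k) * b"
      by (simp add: sum_distrib_right mult.assoc)
    then show "psi RR A x * mink_inner (x, 1) (\<sigma> A) * (1 / Spsi \<Gamma> RR x) =
        (\<Sum>k\<in>UNIV. fst (\<sigma> A) $ k * (x$k * (psi RR A x * (1 / Spsi \<Gamma> RR x)))) + (- snd (\<sigma> A)) * (psi RR A x * (1 / Spsi \<Gamma> RR x))"
      unfolding b_def[symmetric] m by (simp add: b_def algebra_simps)
  qed
  also have "\<dots> = (\<Sum>A\<in>Fs RR \<rho>. \<Sum>k\<in>UNIV. coef \<sigma> (Inl (A, k)) * bas \<Gamma> RR (Inl (A, k)) x)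
      + (\<Sum>A\<in>Fs RR \<rho>. coef \<sigma> (Inr A) * bas \<Gamma> RR (Inr A) x)"
    by (simp only: coef.simps bas.simps sum.distrib)
  also have "\<dots> = (\<Sum>p\<in>IdxG (Fs RR \<rho>). coef \<sigma> p * bas \<Gamma> RR p x)"
    unfolding IdxG_def sum.Plus[OF finite_cartesian_product[OF fin finite_class.finite_UNIV] fin]
    by (simp add: sum.cartesian_product o_def case_prod_unfold coef_Inl bas_Inl)
  finally show ?thesis .
qed

lemma h0_smooth: "smooth_on (ball 0 1) (h0 \<Gamma> RR \<sigma>)"
proof (rule local_smooth[where g="\<lambda>\<rho> x. \<Sum>p\<in>IdxG (Fs RR \<rho>). coef \<sigma> p * bas \<Gamma> RR p x"])
  show "\<rho> < 1 \<Longrightarrow> x \<in> ball 0 \<rho> \<Longrightarrow> h0 \<Gamma> RR \<sigma> x = (\<Sum>p\<in>IdxG (Fs RR \<rho>). coef \<sigma> p * bas \<Gamma> RR p x)" for \<rho> x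
    by (rule h0_rep) auto
  show "smooth_on (ball 0 \<rho>) (\<lambda>x. \<Sum>p\<in>IdxG (Fs RR \<rho>). coef \<sigma> p * bas \<Gamma> RR p x)" if "\<rho> < 1" for \<rho>
    by (rule smooth_sum[OF open_ball IdxG_finite[OF that]], rule smooth_scale[OF open_ball])
       (rule smooth_on_subset[OF bas_smooth ball_sub[OF that]])
qed

lemma h0_iter:
  assumes \<rho>: "\<rho> < 1" and x: "x \<in> ball 0 \<rho>"
  shows "iter_partial is (h0 \<Gamma> RR \<sigma>) x = (\<Sum>p\<in>IdxG (Fs RR \<rho>). coef \<sigma> p * iter_partial is (bas \<Gamma> RR p) x)"
proof -
  have sm: "\<And>p. p \<in> IdxG (Fs RR \<rho>) \<Longrightarrow> smooth_on (ball 0 \<rho>) (bas \<Gamma> RR p)"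
    using smooth_on_subset[OF bas_smooth ball_sub[OF \<rho>]] by blast
  have "iter_partial is (h0 \<Gamma> RR \<sigma>) x = iter_partial is (\<lambda>x. \<Sum>p\<in>IdxG (Fs RR \<rho>). coef \<sigma> p * bas \<Gamma> RR p x) x"
  proof (rule iter_partial_local[OF open_ball _ _ x])
    show "\<And>y. y \<in> ball 0 \<rho> \<Longrightarrow> h0 \<Gamma> RR \<sigma> y = (\<Sum>p\<in>IdxG (Fs RR \<rho>). coef \<sigma> p * bas \<Gamma> RR p y)"
      by (rule h0_rep[OF \<rho>]) auto
    show "smooth_on (ball 0 \<rho>) (\<lambda>x. \<Sum>p\<in>IdxG (Fs RR \<rho>). coef \<sigma> p * bas \<Gamma> RR p x)"
      by (rule smooth_sum[OF open_ball IdxG_finite[OF \<rho>]], rule smooth_scale[OF open_ball]) (rule sm)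
  qed
  also have "\<dots> = (\<Sum>p\<in>IdxG (Fs RR \<rho>). coef \<sigma> p * iter_partial is (bas \<Gamma> RR p) x)"
    by (rule iter_partial_lincomb[OF open_ball IdxG_finite[OF \<rho>] sm x])
  finally show ?thesis .
qed

end

definition dimG :: "('n::finite mink \<Rightarrow> 'n mink) set \<Rightarrow> real" where
  "dimG G = real CARD('n) ^ 2"

lemma finite_bound:
  assumes "finite J" "\<And>q. q \<in> J \<Longrightarrow> \<exists>B. \<forall>z\<in>K. \<bar>F q z\<bar> \<le> (B::real)"
  shows "\<exists>B\<ge>0. \<forall>q\<in>J. \<forall>z\<in>K. \<bar>F q z\<bar> \<le> B"
proof -
  obtain Bf where Bf: "\<And>q. q \<in> J \<Longrightarrow> \<forall>z\<in>K. \<bar>F q z\<bar> \<le> Bf q" using assms(2) by metis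
  have "\<forall>q\<in>J. \<forall>z\<in>K. \<bar>F q z\<bar> \<le> (\<Sum>q\<in>J. \<bar>Bf q\<bar>)"
  proof (intro ballI)
    fix q z assume q: "q \<in> J" and z: "z \<in> K"
    have "\<bar>F q z\<bar> \<le> \<bar>Bf q\<bar>" using Bf[OF q] z by fastforce
    also have "\<dots> \<le> (\<Sum>q\<in>J. \<bar>Bf q\<bar>)" by (rule member_le_sum[OF q _ assms(1)]) simp
    finally show "\<bar>F q z\<bar> \<le> (\<Sum>q\<in>J. \<bar>Bf q\<bar>)" .
  qed
  moreover have "(\<Sum>q\<in>J. \<bar>Bf q\<bar>) \<ge> 0" by (simp add: sum_nonneg)
  ultimately show ?thesis by blast
qed

lemma cont_bound:
  fixes f :: "real^'n::finite \<Rightarrow> real"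
  assumes "smooth_on (ball 0 1) f" "r' < 1"
  shows "\<exists>B. \<forall>z\<in>cball 0 r'. \<bar>iter_partial is f z\<bar> \<le> B"
proof -
  have "iter_partial is f differentiable_on ball 0 1" using assms(1) unfolding smooth_on_def by blast
  then have c: "continuous_on (ball 0 1) (iter_partial is f)" by (rule differentiable_imp_continuous_on)
  have sub: "cball (0::real^'n) r' \<subseteq> ball 0 1" using assms(2) by auto
  have "compact (iter_partial is f ` cball 0 r')"
    by (rule compact_continuous_image[OF continuous_on_subset[OF c sub] compact_cball])
  then have "bounded (iter_partial is f ` cball 0 r')" by (rule compact_imp_bounded)
  then show ?thesis unfolding bounded_iff by auto
qed

context latt2 begin

definition r1 :: real where "r1 = (1 + r) / 2"
definition \<rho>2 :: real where "\<rho>2 = (3 + r) / 4"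

lemma r1: "r < r1" "r1 < \<rho>2" "\<rho>2 < 1" "0 \<le> r1"
  using r unfolding r1_def \<rho>2_def by auto

definition Bd :: real where
  "Bd = (SOME B. B \<ge> 0 \<and> (\<forall>q\<in>IdxG (Fs RR \<rho>2) \<times> UNIV \<times> UNIV. \<forall>z\<in>cball 0 r1.
      \<bar>iter_partial [snd (snd q), fst (snd q)] (bas \<Gamma> RR (fst q)) z\<bar> \<le> B))"

lemma Bd: "Bd \<ge> 0" "\<And>p i j z. p \<in> IdxG (Fs RR \<rho>2) \<Longrightarrow> z \<in> cball 0 r1 \<Longrightarrow>
    \<bar>iter_partial [j, i] (bas \<Gamma> RR p) z\<bar> \<le> Bd"
proof -
  have "\<exists>B\<ge>0. \<forall>q\<in>IdxG (Fs RR \<rho>2) \<times> UNIV \<times> UNIV. \<forall>z\<in>cball 0 r1.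
      \<bar>iter_partial [snd (snd q), fst (snd q)] (bas \<Gamma> RR (fst q)) z\<bar> \<le> B"
  proof (rule finite_bound)
    show "finite (IdxG (Fs RR \<rho>2) \<times> (UNIV::'a set) \<times> (UNIV::'a set))" using IdxG_finite[OF r1(3)] by simp
    have r11: "r1 < 1" using r1 by simp
    fix q show "\<exists>B. \<forall>z\<in>cball 0 r1. \<bar>iter_partial [snd (snd q), fst (snd q)] (bas \<Gamma> RR (fst q)) z\<bar> \<le> B"
      by (rule cont_bound[OF bas_smooth r11])
  qed
  then have "Bd \<ge> 0 \<and> (\<forall>q\<in>IdxG (Fs RR \<rho>2) \<times> UNIV \<times> UNIV. \<forall>z\<in>cball 0 r1.
      \<bar>iter_partial [snd (snd q), fst (snd q)] (bas \<Gamma> RR (fst q)) z\<bar> \<le> Bd)"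
    unfolding Bd_def by (rule someI_ex)
  then show "Bd \<ge> 0" "\<And>p i j z. p \<in> IdxG (Fs RR \<rho>2) \<Longrightarrow> z \<in> cball 0 r1 \<Longrightarrow>
    \<bar>iter_partial [j, i] (bas \<Gamma> RR p) z\<bar> \<le> Bd" by auto
qed

definition Mc where "Mc \<sigma> = Bd * (\<Sum>p\<in>IdxG (Fs RR \<rho>2). \<bar>coef \<sigma> p\<bar>)"
definition cst where "cst \<sigma> = dimG \<Gamma> * Mc \<sigma>"
definition hh where "hh \<sigma> = (\<lambda>z. h0 \<Gamma> RR \<sigma> z - cst \<sigma> * L z)"

lemma hess_h0:
  assumes z: "z \<in> ball 0 r1"
  shows "\<bar>iter_partial [j, i] (h0 \<Gamma> RR \<sigma>) z\<bar> \<le> Mc \<sigma>"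
proof -
  have zz: "z \<in> ball 0 \<rho>2" using z r1 by auto
  have zc: "z \<in> cball 0 r1" using z by auto
  have "\<bar>iter_partial [j, i] (h0 \<Gamma> RR \<sigma>) z\<bar> = \<bar>\<Sum>p\<in>IdxG (Fs RR \<rho>2). coef \<sigma> p * iter_partial [j, i] (bas \<Gamma> RR p) z\<bar>"
    unfolding h0_iter[OF r1(3) zz] ..
  also have "\<dots> \<le> (\<Sum>p\<in>IdxG (Fs RR \<rho>2). \<bar>coef \<sigma> p * iter_partial [j, i] (bas \<Gamma> RR p) z\<bar>)"
    by (rule sum_abs)
  also have "\<dots> \<le> (\<Sum>p\<in>IdxG (Fs RR \<rho>2). \<bar>coef \<sigma> p\<bar> * Bd)"
  proof (rule sum_mono)
    fix p assume p: "p \<in> IdxG (Fs RR \<rho>2)"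
    show "\<bar>coef \<sigma> p * iter_partial [j, i] (bas \<Gamma> RR p) z\<bar> \<le> \<bar>coef \<sigma> p\<bar> * Bd"
      unfolding abs_mult by (rule mult_left_mono[OF Bd(2)[OF p zc] abs_ge_zero])
  qed
  also have "\<dots> = Mc \<sigma>" unfolding Mc_def by (simp add: sum_distrib_left mult.commute)
  finally show ?thesis .
qed

lemma hh_smooth: "smooth_on (ball 0 1) (hh \<sigma>)"
  unfolding hh_def by (rule smooth_diff[OF open_ball h0_smooth smooth_scale[OF open_ball smooth_L]])

lemma hh_convex_W: "convex_on (ball 0 r1) (hh \<sigma>)"
  unfolding hh_def
proof (rule convex_hessian[OF open_ball _ convex_ball _ h0_smooth])
  show "ball 0 r1 \<subseteq> ball (0::real^'a) 1" "ball 0 r1 \<subseteq> ball (0::real^'a) 1" using r1 by auto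
  show "\<And>z i j. z \<in> ball 0 r1 \<Longrightarrow> \<bar>iter_partial [j, i] (h0 \<Gamma> RR \<sigma>) z\<bar> \<le> Mc \<sigma>" by (rule hess_h0)
  show "cst \<sigma> \<ge> real CARD('a)^2 * Mc \<sigma>" unfolding cst_def dimG_def by simp
qed

end

context latt2 begin

lemma hh_fun_act:
  assumes \<sigma>: "cocycle \<Gamma> \<sigma>" and B: "B \<in> \<Gamma>" and x: "norm x < 1"
  shows "fun_act B (\<sigma> B) (hh \<sigma>) x = hh \<sigma> x"
proof -
  define y where "y = klein_act (inv B) x"
  define s where "s = sc (inv B) x"
  have s: "s > 0" unfolding s_def using sc_pos[OF G_invO[OF B] x] .
  have Ly: "s * L y = L x" unfolding y_def s_def using klein_act_props(2)[OF G_invO[OF B] x] s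
    unfolding s_def by simp
  have h0e: "s * h0 \<Gamma> RR \<sigma> y + mink_inner (x, 1) (\<sigma> B) = h0 \<Gamma> RR \<sigma> x"
    using h0_equivariant[OF \<sigma> B x Spsi_pos[OF x]] fun_act_eq[OF G_O[OF B] G_invO[OF B] x, of "\<sigma> B" "h0 \<Gamma> RR \<sigma>"]
    unfolding y_def s_def by simp
  have "fun_act B (\<sigma> B) (hh \<sigma>) x = s * (h0 \<Gamma> RR \<sigma> y - cst \<sigma> * L y) + mink_inner (x, 1) (\<sigma> B)"
    unfolding y_def s_def using fun_act_eq[OF G_O[OF B] G_invO[OF B] x] unfolding hh_def by simp
  also have "\<dots> = hh \<sigma> x" unfolding hh_def using h0e Ly by (simp add: algebra_simps)
  finally show ?thesis .
qed

lemma hh_equivariant: "cocycle \<Gamma> \<sigma> \<Longrightarrow> equivariant \<Gamma> \<sigma> (hh \<sigma>)"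
  unfolding equivariant_def
proof (intro conjI ballI)
  have "hh \<sigma> differentiable_on ball 0 1"
    using hh_smooth unfolding smooth_on_def by (metis iter_partial.simps(1))
  then show "continuous_on (ball 0 1) (hh \<sigma>)" by (rule differentiable_imp_continuous_on)
qed (auto intro: hh_fun_act)

lemma klein_cont:
  assumes B: "B \<in> \<Gamma>" and z: "norm z < 1"
  shows "continuous (at z) (klein_act (inv B))"
proof -
  have lin: "bounded_linear (inv B)"
    using O_plus_D(1)[OF G_invO[OF B]] by (simp add: linear_conv_bounded_linear)
  have c1: "continuous (at z) (\<lambda>x. inv B (x, 1::real))"
    by (rule bounded_linear.continuous[OF lin]) (intro continuous_intros)
  have nz: "snd (inv B (z, 1)) \<noteq> 0" using sc_pos[OF G_invO[OF B] z] by (simp add: sc_def)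
  have "continuous (at z) (\<lambda>x. (1 / snd (inv B (x, 1))) *\<^sub>R fst (inv B (x, 1)))"
    using c1 nz by (intro continuous_intros) auto
  then show ?thesis unfolding klein_act_def[abs_def] .
qed

lemma transport:
  assumes B: "B \<in> \<Gamma>"
    and feq: "\<And>x. norm x < 1 \<Longrightarrow> fun_act B v f x = f x"
    and W: "open W" "convex W" "W \<subseteq> ball 0 1" and fW: "convex_on W f"
    and z: "norm z < 1" and zW: "klein_act (inv B) z \<in> W"
  shows "\<exists>\<delta>>0. convex_on (ball z \<delta>) f"
proof -
  let ?\<phi> = "klein_act (inv B)"
  obtain e where e: "e > 0" "ball (?\<phi> z) e \<subseteq> W" using W(1) zW open_contains_ball by blast
  obtain d0 where d0: "d0 > 0" "\<And>x. dist x z < d0 \<Longrightarrow> dist (?\<phi> x) (?\<phi> z) < e"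
    using klein_cont[OF B z] e(1) unfolding continuous_at_eps_delta by blast
  define \<delta> where "\<delta> = min d0 (1 - norm z)"
  have \<delta>: "\<delta> > 0" unfolding \<delta>_def using d0 z by simp
  have inB: "norm x < 1" if "x \<in> ball z \<delta>" for x
  proof -
    have "norm x \<le> norm z + dist x z" by (metis dist_norm norm_triangle_sub add.commute)
    also have "dist x z < 1 - norm z" using that unfolding \<delta>_def by (simp add: dist_commute)
    finally show ?thesis by simp
  qed
  have inW: "?\<phi> x \<in> W" if "x \<in> ball z \<delta>" for x
  proof -
    have "dist x z < d0" using that unfolding \<delta>_def by (simp add: dist_commute)
    then have "dist (?\<phi> z) (?\<phi> x) < e" using d0(2) by (simp add: dist_commute)
    then show ?thesis using e(2) by auto
  qed
  define m where "m = (\<lambda>x. mink_inner (x, 1) v)"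
  have fx: "f x = sc (inv B) x * f (?\<phi> x) + m x" if "norm x < 1" for x
    using feq[OF that] fun_act_eq[OF G_O[OF B] G_invO[OF B] that, of v f] unfolding m_def by simp
  have "convex_on (ball z \<delta>) f"
    unfolding convex_on_def
  proof (intro conjI convex_ball ballI allI impI)
    fix x1 x2 and u w :: real assume x12: "x1 \<in> ball z \<delta>" "x2 \<in> ball z \<delta>" and uw: "u \<ge> 0" "w \<ge> 0" "u + w = 1"
    define x where "x = u *\<^sub>R x1 + w *\<^sub>R x2"
    have xb: "x \<in> ball z \<delta>" unfolding x_def using convexD[OF convex_ball x12 uw] .
    define s where "s = sc (inv B) x"
    define s1 where "s1 = sc (inv B) x1"
    define s2 where "s2 = sc (inv B) x2"
    have spos: "s > 0" "s1 > 0" "s2 > 0" unfolding s_def s1_def s2_def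
      using sc_pos[OF G_invO[OF B]] inB xb x12 by auto
    have lin: "linear (inv B)" using O_plus_D(1)[OF G_invO[OF B]] .
    have P: "(x, 1::real) = u *\<^sub>R (x1, 1) + w *\<^sub>R (x2, 1)" unfolding x_def using uw(3) by simp
    have eq: "inv B (x, 1) = u *\<^sub>R inv B (x1, 1) + w *\<^sub>R inv B (x2, 1)"
      by (simp only: P linear_add[OF lin] linear_scale[OF lin])
    have fstA: "fst (inv B (y, 1)) = sc (inv B) y *\<^sub>R ?\<phi> y" if "norm y < 1" for y
      using A_Pair[OF G_invO[OF B] that] by simp
    have ssum: "s = u * s1 + w * s2" unfolding s_def s1_def s2_def sc_def using arg_cong[OF eq, of snd] by simp
    have phi: "s *\<^sub>R ?\<phi> x = (u * s1) *\<^sub>R ?\<phi> x1 + (w * s2) *\<^sub>R ?\<phi> x2"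
      using arg_cong[OF eq, of fst] fstA[of x] fstA[of x1] fstA[of x2] inB xb x12
      unfolding s_def s1_def s2_def by simp
    define l1 where "l1 = u * s1 / s"
    define l2 where "l2 = w * s2 / s"
    have l12: "l1 + l2 = (u * s1 + w * s2) / s" unfolding l1_def l2_def by (simp add: add_divide_distrib)
    have l: "l1 \<ge> 0" "l2 \<ge> 0" "l1 + l2 = 1"
      using spos uw unfolding l1_def l2_def apply simp_all
      using l12 ssum spos unfolding l1_def l2_def by simp
    have phix: "?\<phi> x = l1 *\<^sub>R ?\<phi> x1 + l2 *\<^sub>R ?\<phi> x2"
    proof -
      have "?\<phi> x = (1 / s) *\<^sub>R (s *\<^sub>R ?\<phi> x)" using spos by simp
      also have "\<dots> = l1 *\<^sub>R ?\<phi> x1 + l2 *\<^sub>R ?\<phi> x2" unfolding phi l1_def l2_def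
        by (simp add: scaleR_add_right)
      finally show ?thesis .
    qed
    have cv: "f (?\<phi> x) \<le> l1 * f (?\<phi> x1) + l2 * f (?\<phi> x2)"
      using fW inW x12 l unfolding convex_on_def phix by blast
    have mx: "m x = u * m x1 + w * m x2"
      unfolding m_def P mi_add_left mi_scale_left ..
    have "f x = s * f (?\<phi> x) + m x" unfolding s_def using fx inB xb by blast
    also have "\<dots> \<le> s * (l1 * f (?\<phi> x1) + l2 * f (?\<phi> x2)) + m x"
      using cv spos by (simp add: mult_left_mono)
    also have "\<dots> = u * (s1 * f (?\<phi> x1) + m x1) + w * (s2 * f (?\<phi> x2) + m x2)"
      unfolding mx l1_def l2_def using spos by (simp add: field_simps)
    also have "\<dots> = u * f x1 + w * f x2"
      using fx[of x1] fx[of x2] inB x12 unfolding s1_def s2_def by simp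
    finally show "f (u *\<^sub>R x1 + w *\<^sub>R x2) \<le> u * f x1 + w * f x2" unfolding x_def .
  qed
  then show ?thesis using \<delta> by blast
qed

lemma hh_convex: assumes \<sigma>: "cocycle \<Gamma> \<sigma>" shows "convex_on (ball 0 1) (hh \<sigma>)"
proof (rule convex_local_global[OF open_ball convex_ball hh_smooth])
  fix z :: "real^'a" assume "z \<in> ball 0 1"
  then have z: "norm z < 1" by simp
  obtain B where B: "B \<in> \<Gamma>" "norm (klein_act (inv B) z) \<le> r" using cover[OF z] by blast
  show "\<exists>\<delta>>0. convex_on (ball z \<delta>) (hh \<sigma>)"
  proof (rule transport[OF B(1) _ open_ball convex_ball _ hh_convex_W z])
    show "\<And>x. norm x < 1 \<Longrightarrow> fun_act B (\<sigma> B) (hh \<sigma>) x = hh \<sigma> x" by (rule hh_fun_act[OF \<sigma> B(1)])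
    show "ball 0 r1 \<subseteq> ball (0::real^'a) 1" using r1 by auto
    show "klein_act (inv B) z \<in> ball 0 r1" using B(2) r1 by simp
  qed
qed

end

context latt2 begin

lemma coef_tendsto:
  assumes conv: "\<forall>A\<in>\<Gamma>. (\<lambda>n. \<tau>s n A) \<longlonglongrightarrow> \<tau> A" and p: "p \<in> IdxG (Fs RR \<rho>)"
  shows "(\<lambda>n. coef (\<tau>s n) p) \<longlonglongrightarrow> coef \<tau> p"
proof (cases p)
  case (Inl a)
  then obtain A k where pa: "p = Inl (A, k)" by (cases a) auto
  then have A: "A \<in> \<Gamma>" using p unfolding IdxG_def Fs_def by auto
  show ?thesis unfolding pa coef.simps
    by (intro tendsto_vec_nth tendsto_fst) (use conv A in blast)
next
  case (Inr A)
  then have A: "A \<in> \<Gamma>" using p unfolding IdxG_def Fs_def by auto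
  show ?thesis unfolding Inr coef.simps
    by (intro tendsto_minus tendsto_snd) (use conv A in blast)
qed

lemma cst_tendsto:
  assumes conv: "\<forall>A\<in>\<Gamma>. (\<lambda>n. \<tau>s n A) \<longlonglongrightarrow> \<tau> A"
  shows "(\<lambda>n. cst (\<tau>s n)) \<longlonglongrightarrow> cst \<tau>"
  unfolding cst_def Mc_def
  by (intro tendsto_mult tendsto_const tendsto_sum tendsto_rabs coef_tendsto[OF conv])

lemma main_convergence:
  assumes conv: "\<forall>A\<in>\<Gamma>. (\<lambda>n. \<tau>s n A) \<longlonglongrightarrow> \<tau> A" and x: "x \<in> ball 0 1"
  shows "(\<lambda>n. hh (\<tau>s n) x) \<longlonglongrightarrow> hh \<tau> x"
    "(\<lambda>n. iter_partial is (hh (\<tau>s n)) x) \<longlonglongrightarrow> iter_partial is (hh \<tau>) x"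
proof -
  define \<rho> where "\<rho> = (norm x + 1) / 2"
  have \<rho>: "\<rho> < 1" "x \<in> ball 0 \<rho>" "norm x \<le> \<rho>" using x unfolding \<rho>_def by auto
  have h0c: "(\<lambda>n. h0 \<Gamma> RR (\<tau>s n) x) \<longlonglongrightarrow> h0 \<Gamma> RR \<tau> x"
    unfolding h0_rep[OF \<rho>(1,3)]
    by (intro tendsto_sum tendsto_mult tendsto_const coef_tendsto[OF conv])
  show "(\<lambda>n. hh (\<tau>s n) x) \<longlonglongrightarrow> hh \<tau> x"
    unfolding hh_def by (intro tendsto_diff tendsto_mult tendsto_const h0c cst_tendsto[OF conv])
  have ip: "iter_partial is (hh \<sigma>) x = (\<Sum>p\<in>IdxG (Fs RR \<rho>). coef \<sigma> p * iter_partial is (bas \<Gamma> RR p) x) - cst \<sigma> * iter_partial is L x" for \<sigma>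
    unfolding hh_def iter_partial_diff_scale[OF open_ball h0_smooth smooth_L x] h0_iter[OF \<rho>(1,2)] ..
  show "(\<lambda>n. iter_partial is (hh (\<tau>s n)) x) \<longlonglongrightarrow> iter_partial is (hh \<tau>) x"
    unfolding ip by (intro tendsto_diff tendsto_sum tendsto_mult tendsto_const coef_tendsto[OF conv] cst_tendsto[OF conv])
qed

end

lemma cocycle_neg:
  assumes "is_subgroup_O G" "cocycle G \<tau>" shows "cocycle G (\<lambda>A. - \<tau> A)"
  using assms unfolding cocycle_def is_subgroup_O_def
  by (auto simp: O_plus_def linear_neg)

lemma fun_act_neg: "fun_act A v (\<lambda>x. - g x) x = - fun_act A (- v) g x"
  by (simp add: fun_act_def algebra_simps)

lemma equivariant_neg:
  assumes "equivariant G (\<lambda>A. - \<tau> A) g"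
  shows "equivariant G \<tau> (\<lambda>x. - g x)"
  using assms unfolding equivariant_def by (auto simp: fun_act_neg continuous_on_minus)

lemma smooth_neg_ball: "smooth_on (ball 0 1) g \<Longrightarrow> smooth_on (ball 0 1) (\<lambda>x. - g x)"
  by (rule smooth_neg[OF open_ball])

lemma cover_radius:
  fixes \<Gamma> :: "((real^'n::finite) \<times> real \<Rightarrow> (real^'n) \<times> real) set"
  assumes sub: "is_subgroup_O \<Gamma>" and cc: "acts_cocompactly \<Gamma>"
  shows "\<exists>r. 0 \<le> r \<and> r < 1 \<and> (\<forall>x. norm x < 1 \<longrightarrow> (\<exists>A\<in>\<Gamma>. norm (klein_act (inv A) x) \<le> r))"
proof -
  obtain K where K: "compact K" "K \<subseteq> ball 0 1" "(\<Union>A\<in>\<Gamma>. klein_act A ` K) = ball 0 1"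
    using cc unfolding acts_cocompactly_def by blast
  obtain r where r: "0 \<le> r" "r < 1" "\<And>k. k \<in> K \<Longrightarrow> norm k \<le> r"
  proof (cases "K = {}")
    case True then show ?thesis using that[of 0] by simp
  next
    case False
    have "compact (norm ` K)" by (rule compact_continuous_image[OF continuous_on_norm_id K(1)])
    then obtain m where m: "m \<in> norm ` K" "\<And>t. t \<in> norm ` K \<Longrightarrow> t \<le> m"
      using compact_attains_sup[of "norm ` K"] False by blast
    then obtain k0 where k0: "k0 \<in> K" "m = norm k0" by blast
    have "m < 1" using k0 K(2) by auto
    then show ?thesis using that[of m] m k0 by auto
  qed
  have "\<exists>A\<in>\<Gamma>. norm (klein_act (inv A) x) \<le> r" if x: "norm x < 1" for x
  proof -
    have "x \<in> (\<Union>A\<in>\<Gamma>. klein_act A ` K)" using K(3) x by simp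
    then obtain A k where A: "A \<in> \<Gamma>" "k \<in> K" "x = klein_act A k" by blast
    have AO: "A \<in> O_plus" "inv A \<in> O_plus" using sub A(1) unfolding is_subgroup_O_def by auto
    have "norm k < 1" using A(2) K(2) by auto
    then have "klein_act (inv A) x = k" using klein_act_inv_cancel(1)[OF AO] A(3) by simp
    then have "norm (klein_act (inv A) x) \<le> r" using A(2) r(3) by simp
    then show ?thesis using A(1) by blast
  qed
  then show ?thesis using r by blast
qed

theorem proposition3p11:
  fixes \<Gamma> :: "((real^'n::finite) \<times> real \<Rightarrow> (real^'n) \<times> real) set"
  assumes "CARD('n) \<ge> 2"
    and "is_subgroup_O \<Gamma>"
    and "acts_freely \<Gamma>"
    and "acts_properly_discontinuously \<Gamma>"
    and "acts_cocompactly \<Gamma>"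
  shows
    "(\<forall>\<tau>. cocycle \<Gamma> \<tau> \<longrightarrow>
        (\<exists>h. smooth_on (ball 0 1) h \<and> convex_on (ball 0 1) h \<and> equivariant \<Gamma> \<tau> h)) \<and>
     (\<forall>\<tau>. cocycle \<Gamma> \<tau> \<longrightarrow>
        (\<exists>h. smooth_on (ball 0 1) h \<and> concave_on (ball 0 1) h \<and> equivariant \<Gamma> \<tau> h)) \<and>
     (\<forall>\<tau> \<tau>s. cocycle \<Gamma> \<tau> \<and> (\<forall>n::nat. cocycle \<Gamma> (\<tau>s n)) \<and>
          (\<forall>A\<in>\<Gamma>. (\<lambda>n. \<tau>s n A) \<longlonglongrightarrow> \<tau> A) \<longrightarrow>
        (\<exists>h hs. smooth_on (ball 0 1) h \<and> convex_on (ball 0 1) h \<and> equivariant \<Gamma> \<tau> h \<and>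
           (\<forall>n. smooth_on (ball 0 1) (hs n) \<and> convex_on (ball 0 1) (hs n) \<and>
                equivariant \<Gamma> (\<tau>s n) (hs n)) \<and>
           (\<forall>x\<in>ball 0 1. (\<lambda>n. hs n x) \<longlonglongrightarrow> h x) \<and>
           (\<forall>i j. \<forall>x\<in>ball 0 1. (\<lambda>n. iter_partial [i, j] (hs n) x) \<longlonglongrightarrow> iter_partial [i, j] h x))) \<and>
     (\<forall>\<tau> \<tau>s. cocycle \<Gamma> \<tau> \<and> (\<forall>n::nat. cocycle \<Gamma> (\<tau>s n)) \<and>
          (\<forall>A\<in>\<Gamma>. (\<lambda>n. \<tau>s n A) \<longlonglongrightarrow> \<tau> A) \<longrightarrow>
        (\<exists>h hs. smooth_on (ball 0 1) h \<and> concave_on (ball 0 1) h \<and> equivariant \<Gamma> \<tau> h \<and>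
           (\<forall>n. smooth_on (ball 0 1) (hs n) \<and> concave_on (ball 0 1) (hs n) \<and>
                equivariant \<Gamma> (\<tau>s n) (hs n)) \<and>
           (\<forall>x\<in>ball 0 1. (\<lambda>n. hs n x) \<longlonglongrightarrow> h x) \<and>
           (\<forall>i j. \<forall>x\<in>ball 0 1. (\<lambda>n. iter_partial [i, j] (hs n) x) \<longlonglongrightarrow> iter_partial [i, j] h x)))"
proof -
  obtain r where r: "0 \<le> r" "r < 1" "\<And>x. norm x < 1 \<Longrightarrow> \<exists>A\<in>\<Gamma>. norm (klein_act (inv A) x) \<le> r"
    using cover_radius[OF assms(2,5)] by blast
  interpret L2: latt2 \<Gamma> r
    by (unfold_locales) (use assms(2,4) r in auto)
  have cvx: "smooth_on (ball 0 1) (L2.hh \<tau>) \<and> convex_on (ball 0 1) (L2.hh \<tau>) \<and> equivariant \<Gamma> \<tau> (L2.hh \<tau>)"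
    if "cocycle \<Gamma> \<tau>" for \<tau>
    using L2.hh_smooth L2.hh_convex[OF that] L2.hh_equivariant[OF that] by blast
  have ccv: "smooth_on (ball 0 1) (\<lambda>x. - L2.hh (\<lambda>A. - \<tau> A) x) \<and> concave_on (ball 0 1) (\<lambda>x. - L2.hh (\<lambda>A. - \<tau> A) x)
      \<and> equivariant \<Gamma> \<tau> (\<lambda>x. - L2.hh (\<lambda>A. - \<tau> A) x)"
    if "cocycle \<Gamma> \<tau>" for \<tau>
  proof -
    have c: "cocycle \<Gamma> (\<lambda>A. - \<tau> A)" using cocycle_neg[OF assms(2) that] .
    show ?thesis using cvx[OF c] smooth_neg_ball equivariant_neg unfolding concave_on_def by auto
  qed
  have part3: "\<exists>h hs. smooth_on (ball 0 1) h \<and> convex_on (ball 0 1) h \<and> equivariant \<Gamma> \<tau> h \<and>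
           (\<forall>n. smooth_on (ball 0 1) (hs n) \<and> convex_on (ball 0 1) (hs n) \<and>
                equivariant \<Gamma> (\<tau>s n) (hs n)) \<and>
           (\<forall>x\<in>ball 0 1. (\<lambda>n. hs n x) \<longlonglongrightarrow> h x) \<and>
           (\<forall>i j. \<forall>x\<in>ball 0 1. (\<lambda>n. iter_partial [i, j] (hs n) x) \<longlonglongrightarrow> iter_partial [i, j] h x)"
    if t: "cocycle \<Gamma> \<tau>" "\<forall>n::nat. cocycle \<Gamma> (\<tau>s n)" "\<forall>A\<in>\<Gamma>. (\<lambda>n. \<tau>s n A) \<longlonglongrightarrow> \<tau> A" for \<tau> \<tau>s
    using cvx[OF t(1)] cvx t(2) L2.main_convergence[OF t(3)]
    by (intro exI[where x="L2.hh \<tau>"] exI[where x="\<lambda>n. L2.hh (\<tau>s n)"]) blast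
  have part4: "\<exists>h hs. smooth_on (ball 0 1) h \<and> concave_on (ball 0 1) h \<and> equivariant \<Gamma> \<tau> h \<and>
           (\<forall>n. smooth_on (ball 0 1) (hs n) \<and> concave_on (ball 0 1) (hs n) \<and>
                equivariant \<Gamma> (\<tau>s n) (hs n)) \<and>
           (\<forall>x\<in>ball 0 1. (\<lambda>n. hs n x) \<longlonglongrightarrow> h x) \<and>
           (\<forall>i j. \<forall>x\<in>ball 0 1. (\<lambda>n. iter_partial [i, j] (hs n) x) \<longlonglongrightarrow> iter_partial [i, j] h x)"
    if t: "cocycle \<Gamma> \<tau>" "\<forall>n::nat. cocycle \<Gamma> (\<tau>s n)" "\<forall>A\<in>\<Gamma>. (\<lambda>n. \<tau>s n A) \<longlonglongrightarrow> \<tau> A" for \<tau> \<tau>s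
  proof -
    have conv': "\<forall>A\<in>\<Gamma>. (\<lambda>n. - \<tau>s n A) \<longlonglongrightarrow> - \<tau> A" using t(3) by (auto intro: tendsto_minus)
    have pw: "(\<lambda>n. - L2.hh (\<lambda>A. - \<tau>s n A) x) \<longlonglongrightarrow> - L2.hh (\<lambda>A. - \<tau> A) x" if "x \<in> ball 0 1" for x
      by (intro tendsto_minus L2.main_convergence(1)[OF conv' that])
    have dd: "(\<lambda>n. iter_partial [i, j] (\<lambda>x. - L2.hh (\<lambda>A. - \<tau>s n A) x) x) \<longlonglongrightarrow> iter_partial [i, j] (\<lambda>x. - L2.hh (\<lambda>A. - \<tau> A) x) x"
      if "x \<in> ball 0 1" for i j x
      unfolding iter_partial_neg[OF open_ball L2.hh_smooth that]
      by (intro tendsto_minus L2.main_convergence(2)[OF conv' that])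
    show ?thesis
      using ccv[OF t(1)] ccv t(2) pw dd
      by (intro exI[where x="\<lambda>x. - L2.hh (\<lambda>A. - \<tau> A) x"] exI[where x="\<lambda>n x. - L2.hh (\<lambda>A. - \<tau>s n A) x"]) blast
  qed
  show ?thesis using cvx ccv part3 part4 by blast
qed

end
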